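(* There exists a sequence $(\Omega_n,P_n,\pi_n)$ of finite irreducible reversible Markov chains (in continuous time) satisfying the product condition $t^{(n)}_{\mathrm{rel}}=o(t^{(n)}_{\mathrm{mix}})$, together with sets $A_n\subset\Omega_n$ and states $x_n\in\Omega_n$, such that: (a) $\pi_n(A_n)\ge1/2$ and $\mathbb E_{x_n}[T_{A_n}]=t^{(n)}_{\mathrm H}(1/2)$; (b) the hitting times of $A_n$ from $x_n$ are concentrated, i.e. for every $\epsilon>0$, $\lim_{n\to\infty}\mathrm P_{x_n}\big[|T_{A_n}-\mathbb E_{x_n}[T_{A_n}]|>\epsilon\,\mathbb E_{x_n}[T_{A_n}]\big]=0$; and (c) the sequence does not exhibit a cutoff.
   Context: Chains run in continuous time with heat kernel $H_t(x,y)=\sum_{k\ge0}e^{-t}\frac{t^k}{k!}P^k(x,y)$. $d(t):=\max_x\|\mathrm P^t_x-\pi\|_{\mathrm{TV}}$, $t_{\mathrm{mix}}(\epsilon):=\inf\{t:d(t)\le\epsilon\}$, $t_{\mathrm{mix}}:=t_{\mathrm{mix}}(1/4)$; $t_{\mathrm{rel}}:=(1-\lambda_2)^{-1}$ where $\lambda_2$ is the second largest eigenvalue of $P$. $T_A:=\inf\{t\ge0:X_t\in A\}$; $t_{\mathrm H}(\alpha):=\max_{x\in\Omega,\,A\subset\Omega:\pi(A)\ge\alpha}\mathbb E_x[T_A]$. A sequence exhibits a cutoff if $t^{(n)}_{\mathrm{mix}}(\epsilon)/t^{(n)}_{\mathrm{mix}}(1-\epsilon)\to1$ for every $0<\epsilon<1$.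 *)

theory Defs
  imports "HOL-Analysis.Analysis" "HOL-Library.Landau_Symbols"
begin

text \<open>A finite Markov chain is given by a finite nonempty state space S :: nat set,
  a transition kernel P :: nat => nat => real and a distribution mu :: nat => real.
  Only values on S are relevant.\<close>

fun mpow :: "(nat \<Rightarrow> nat \<Rightarrow> real) \<Rightarrow> nat set \<Rightarrow> nat \<Rightarrow> nat \<Rightarrow> nat \<Rightarrow> real" where
  "mpow P S 0 x y = (if x = y then 1 else 0)"
| "mpow P S (Suc k) x y = (\<Sum>z\<in>S. P x z * mpow P S k z y)"

definition stochastic :: "nat set \<Rightarrow> (nat \<Rightarrow> nat \<Rightarrow> real) \<Rightarrow> bool" where
  "stochastic S P \<longleftrightarrow> (\<forall>x\<in>S. \<forall>y\<in>S. P x y \<ge> 0) \<and> (\<forall>x\<in>S. (\<Sum>y\<in>S. P x y) = 1)"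

definition irreducible_chain :: "nat set \<Rightarrow> (nat \<Rightarrow> nat \<Rightarrow> real) \<Rightarrow> bool" where
  "irreducible_chain S P \<longleftrightarrow> (\<forall>x\<in>S. \<forall>y\<in>S. \<exists>k. mpow P S k x y > 0)"

definition reversible_chain :: "nat set \<Rightarrow> (nat \<Rightarrow> nat \<Rightarrow> real) \<Rightarrow> (nat \<Rightarrow> real) \<Rightarrow> bool" where
  "reversible_chain S P mu \<longleftrightarrow> (\<forall>x\<in>S. \<forall>y\<in>S. mu x * P x y = mu y * P y x)"

text \<open>Finite irreducible reversible Markov chain (S,P,mu); mu is the (positive)
  stationary distribution, stationarity being implied by reversibility.\<close>
definition fin_irr_rev_chain :: "nat set \<Rightarrow> (nat \<Rightarrow> nat \<Rightarrow> real) \<Rightarrow> (nat \<Rightarrow> real) \<Rightarrow> bool" where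
  "fin_irr_rev_chain S P mu \<longleftrightarrow> finite S \<and> S \<noteq> {} \<and> stochastic S P
     \<and> (\<forall>x\<in>S. mu x > 0) \<and> (\<Sum>x\<in>S. mu x) = 1
     \<and> irreducible_chain S P \<and> reversible_chain S P mu"

definition heat :: "(nat \<Rightarrow> nat \<Rightarrow> real) \<Rightarrow> nat set \<Rightarrow> real \<Rightarrow> nat \<Rightarrow> nat \<Rightarrow> real" where
  "heat P S t x y = (\<Sum>k. exp (- t) * t ^ k / fact k * mpow P S k x y)"

definition tv_dist :: "nat set \<Rightarrow> (nat \<Rightarrow> real) \<Rightarrow> (nat \<Rightarrow> real) \<Rightarrow> real" where
  "tv_dist S mu nu = Max ((\<lambda>B. \<bar>(\<Sum>y\<in>B. mu y) - (\<Sum>y\<in>B. nu y)\<bar>) ` Pow S)"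

definition dist_stat :: "nat set \<Rightarrow> (nat \<Rightarrow> nat \<Rightarrow> real) \<Rightarrow> (nat \<Rightarrow> real) \<Rightarrow> real \<Rightarrow> real" where
  "dist_stat S P mu t = Max ((\<lambda>x. tv_dist S (heat P S t x) mu) ` S)"

definition tmix :: "nat set \<Rightarrow> (nat \<Rightarrow> nat \<Rightarrow> real) \<Rightarrow> (nat \<Rightarrow> real) \<Rightarrow> real \<Rightarrow> real" where
  "tmix S P mu eps = Inf {t. t \<ge> 0 \<and> dist_stat S P mu t \<le> eps}"

definition is_eigenvalue :: "nat set \<Rightarrow> (nat \<Rightarrow> nat \<Rightarrow> real) \<Rightarrow> real \<Rightarrow> bool" where
  "is_eigenvalue S P l \<longleftrightarrow> (\<exists>f. (\<exists>x\<in>S. f x \<noteq> 0) \<and> (\<forall>x\<in>S. (\<Sum>y\<in>S. P x y * f y) = l * f x))"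

text \<open>Second largest eigenvalue (counted with multiplicity): it equals 1 iff the
  eigenspace of 1 is at least two-dimensional, i.e. contains a non-constant function;
  otherwise it is the largest eigenvalue below 1.\<close>
definition lambda2 :: "nat set \<Rightarrow> (nat \<Rightarrow> nat \<Rightarrow> real) \<Rightarrow> real" where
  "lambda2 S P = (if \<exists>f. (\<exists>x\<in>S. \<exists>y\<in>S. f x \<noteq> f y) \<and> (\<forall>x\<in>S. (\<Sum>y\<in>S. P x y * f y) = f x)
                  then 1 else Max {l. is_eigenvalue S P l \<and> l < 1})"

definition trel :: "nat set \<Rightarrow> (nat \<Rightarrow> nat \<Rightarrow> real) \<Rightarrow> real" where
  "trel S P = 1 / (1 - lambda2 S P)"

text \<open>Probability that the jump chain, started at x, avoids A at steps 0..k,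
  i.e. P_x[tau_A > k] for the discrete hitting time tau_A of the jump chain.\<close>
fun avoid :: "(nat \<Rightarrow> nat \<Rightarrow> real) \<Rightarrow> nat set \<Rightarrow> nat set \<Rightarrow> nat \<Rightarrow> nat \<Rightarrow> real" where
  "avoid P S A 0 x = (if x \<in> A then 0 else 1)"
| "avoid P S A (Suc k) x = (if x \<in> A then 0 else (\<Sum>y\<in>S. P x y * avoid P S A k y))"

text \<open>The continuous-time
  chain is the jump chain run at the jump times of a rate-1 Poisson clock N_t, so
  T_A > t iff N_t < tau_A, giving sum_k e^{-t} t^k/k! P_x[tau_A > k] for t >= 0.\<close>
definition hit_gt :: "(nat \<Rightarrow> nat \<Rightarrow> real) \<Rightarrow> nat set \<Rightarrow> nat set \<Rightarrow> nat \<Rightarrow> real \<Rightarrow> real" where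
  "hit_gt P S A x t = (if t < 0 then 1 else (\<Sum>k. exp (- t) * t ^ k / fact k * avoid P S A k x))"

text \<open>P_x[T_A < s]. T_A has no atoms in (0,infinity) (atom possibly only at 0),
  hence P_x[T_A < s] = 1 - P_x[T_A > s] for s > 0, and it is 0 for s <= 0.\<close>
definition hit_lt :: "(nat \<Rightarrow> nat \<Rightarrow> real) \<Rightarrow> nat set \<Rightarrow> nat set \<Rightarrow> nat \<Rightarrow> real \<Rightarrow> real" where
  "hit_lt P S A x s = (if s \<le> 0 then 0 else 1 - hit_gt P S A x s)"

definition hit_exp :: "(nat \<Rightarrow> nat \<Rightarrow> real) \<Rightarrow> nat set \<Rightarrow> nat set \<Rightarrow> nat \<Rightarrow> real" where
  "hit_exp P S A x = integral {0..} (hit_gt P S A x)"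

definition hit_dev_prob :: "(nat \<Rightarrow> nat \<Rightarrow> real) \<Rightarrow> nat set \<Rightarrow> nat set \<Rightarrow> nat \<Rightarrow> real \<Rightarrow> real" where
  "hit_dev_prob P S A x eps =
     hit_gt P S A x ((1 + eps) * hit_exp P S A x) + hit_lt P S A x ((1 - eps) * hit_exp P S A x)"

definition tH :: "nat set \<Rightarrow> (nat \<Rightarrow> nat \<Rightarrow> real) \<Rightarrow> (nat \<Rightarrow> real) \<Rightarrow> real \<Rightarrow> real" where
  "tH S P mu alpha = Max {hit_exp P S A x | x A. x \<in> S \<and> A \<subseteq> S \<and> (\<Sum>y\<in>A. mu y) \<ge> alpha}"

definition has_cutoff :: "(nat \<Rightarrow> nat set) \<Rightarrow> (nat \<Rightarrow> nat \<Rightarrow> nat \<Rightarrow> real) \<Rightarrow> (nat \<Rightarrow> nat \<Rightarrow> real) \<Rightarrow> bool" where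
  "has_cutoff S P mu \<longleftrightarrow> (\<forall>eps. 0 < eps \<and> eps < 1 \<longrightarrow>
     (\<lambda>n. tmix (S n) (P n) (mu n) eps / tmix (S n) (P n) (mu n) (1 - eps)) \<longlonglongrightarrow> 1)"

end

theory Submission
  imports Defs "Jordan_Normal_Form.Spectral_Radius"
begin


definition pois :: "real \<Rightarrow> nat \<Rightarrow> real" where
  "pois t k = exp (- t) * t ^ k / fact k"

lemma pois_nonneg: "0 \<le> t \<Longrightarrow> 0 \<le> pois t k"
  by (simp add: pois_def)

lemma pois_pgf: "(\<lambda>k. pois t k * q ^ k) sums exp (t * (q - 1))"
proof -
  have "(\<lambda>k. (t*q)^k /\<^sub>R fact k) sums exp (t*q)" by (rule exp_converges)
  hence "(\<lambda>k. exp (-t) * ((t*q)^k /\<^sub>R fact k)) sums (exp (-t) * exp (t*q))" by (rule sums_mult)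
  moreover have "(\<lambda>k. exp (-t) * ((t*q)^k /\<^sub>R fact k)) = (\<lambda>k. pois t k * q^k)"
    by (auto simp: pois_def divide_inverse power_mult_distrib)
  moreover have "exp (-t) * exp (t*q) = exp (t * (q - 1))"
    by (simp add: exp_add[symmetric] algebra_simps)
  ultimately show ?thesis by simp
qed

lemma pois_sums: "(\<lambda>k. pois t k) sums 1"
  using pois_pgf[of t 1] by simp

lemma summable_pois_bounded:
  assumes "0 \<le> t" "\<And>k. 0 \<le> a k" "\<And>k. a k \<le> 1"
  shows "summable (\<lambda>k. pois t k * a k)"
proof (rule summable_comparison_test'[where g = "pois t"])
  show "summable (pois t)" using pois_sums by (simp add: sums_iff)
  fix k show "norm (pois t k * a k) \<le> pois t k"
    using assms pois_nonneg[of t k] by (simp add: abs_mult mult_left_le)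
qed

lemma exp_strict: "x \<noteq> 0 \<Longrightarrow> 1 + x < exp (x::real)"
proof (cases "1 + x/2 < 0")
  case True thus ?thesis using exp_gt_zero[of x] by linarith
next
  case False
  assume x: "x \<noteq> 0"
  have "(1 + x/2)^2 \<le> exp (x/2) ^ 2"
    using False by (intro power_mono) (use exp_ge_add_one_self[of "x/2"] in auto)
  also have "exp (x/2) ^ 2 = exp x" by (simp add: exp_double[symmetric] power2_eq_square exp_add[symmetric])
  finally have "1 + x + x^2/4 \<le> exp x" by (simp add: power2_eq_square algebra_simps)
  moreover have "x^2 > 0" using x by simp
  ultimately show ?thesis by linarith
qed

lemma beta_lt1: fixes u :: real assumes "0 < u" "u \<noteq> 1" shows "u * exp (1 - u) < 1" "0 \<le> u * exp (1 - u)"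
proof -
  have "1 + (u - 1) < exp (u - 1)" using exp_strict[of "u-1"] assms by simp
  hence "u < exp (u - 1)" by simp
  hence "u * exp (1 - u) < exp (u - 1) * exp (1 - u)" using assms by (simp add: mult_strict_right_mono)
  also have "\<dots> = 1" by (simp add: exp_add[symmetric])
  finally show "u * exp (1 - u) < 1" .
  show "0 \<le> u * exp (1 - u)" using assms by simp
qed

lemma pois_lower:
  assumes t: "0 \<le> t" "t \<le> u * real m" and u: "0 < u" "u \<le> 1"
    and a: "\<And>k. 0 \<le> a k" "\<And>k. a k \<le> 1" "\<And>k. k < m \<Longrightarrow> c \<le> a k" and c: "0 \<le> c"
  shows "c * (1 - (u * exp (1 - u)) ^ m) \<le> (\<Sum>k. pois t k * a k)"
proof -
  define l where "l = 1 / u"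
  have l1: "1 \<le> l" "0 < l" using u by (auto simp: l_def)
  have s1: "(\<lambda>k. c * (pois t k - pois t k * l ^ k / l ^ m)) sums (c * (1 - exp (t * (l - 1)) / l ^ m))"
  proof -
    have d: "(\<lambda>k. pois t k * l ^ k / l ^ m) sums (exp (t * (l - 1)) / l ^ m)"
      using sums_divide[OF pois_pgf[of t l], of "l^m"] .
    have "(\<lambda>k. pois t k - pois t k * l ^ k / l ^ m) sums (1 - exp (t * (l - 1)) / l ^ m)"
      using sums_diff[OF pois_sums[of t] d] by simp
    thus ?thesis by (rule sums_mult)
  qed
  have s2: "summable (\<lambda>k. pois t k * a k)" by (rule summable_pois_bounded) (use t a in auto)
  have le: "c * (pois t k - pois t k * l ^ k / l ^ m) \<le> pois t k * a k" for k
  proof (cases "k < m")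
    case True
    have "l ^ k \<le> l ^ m" using l1 True by (intro power_increasing) auto
    hence "l ^ k / l ^ m \<le> 1" using l1 by (simp add: divide_le_eq_1)
    hence "pois t k * l ^ k / l ^ m \<ge> 0" using pois_nonneg[OF t(1)] l1 by simp
    hence "c * (pois t k - pois t k * l ^ k / l ^ m) \<le> c * pois t k"
      using c by (simp add: mult_left_mono)
    also have "\<dots> \<le> a k * pois t k" using a(3)[OF True] pois_nonneg[OF t(1)] by (simp add: mult_right_mono)
    finally show ?thesis by (simp add: mult.commute)
  next
    case False
    have "l ^ m \<le> l ^ k" using l1 False by (intro power_increasing) auto
    hence "1 \<le> l ^ k / l ^ m" using l1 by simp
    hence "pois t k \<le> pois t k * l ^ k / l ^ m"
      using pois_nonneg[OF t(1), of k] by (metis mult_le_cancel_left1 times_divide_eq_right order_refl mult_le_cancel_left2 not_le mult_left_mono mult.right_neutral)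
    hence "c * (pois t k - pois t k * l ^ k / l ^ m) \<le> 0" using c by (simp add: mult_nonneg_nonpos)
    also have "0 \<le> pois t k * a k" using pois_nonneg[OF t(1)] a(1) by simp
    finally show ?thesis .
  qed
  have "c * (1 - exp (t * (l - 1)) / l ^ m) \<le> (\<Sum>k. pois t k * a k)"
    using sums_le[OF _ s1 summable_sums[OF s2]] le by blast
  moreover have "exp (t * (l - 1)) / l ^ m \<le> (u * exp (1 - u)) ^ m"
  proof -
    have "exp (t * (l - 1)) \<le> exp (u * real m * (l - 1))" using t l1 by (simp add: mult_right_mono)
    also have "u * real m * (l - 1) = real m * (1 - u)" using u by (simp add: l_def field_simps)
    finally have "exp (t * (l - 1)) \<le> exp (real m * (1 - u))" .
    also have "exp (real m * (1 - u)) = exp (1 - u) ^ m" by (simp add: exp_of_nat_mult[symmetric])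
    finally have "exp (t * (l - 1)) / l ^ m \<le> exp (1 - u) ^ m / l ^ m"
      using l1 by (simp add: divide_right_mono)
    also have "exp (1 - u) ^ m / l ^ m = (u * exp (1 - u)) ^ m" using u
      by (simp add: l_def power_divide power_mult_distrib field_simps)
    finally show ?thesis .
  qed
  ultimately show ?thesis using c
    by (meson order_trans mult_left_mono diff_left_mono)
qed

lemma pois_upper:
  assumes t: "u * real m \<le> t" and u: "1 \<le> u"
    and a: "\<And>k. 0 \<le> a k" "\<And>k. a k \<le> 1" "\<And>k. m \<le> k \<Longrightarrow> a k \<le> c" and c: "0 \<le> c"
  shows "(\<Sum>k. pois t k * a k) \<le> c + (u * exp (1 - u)) ^ m"
proof -
  have t0: "0 \<le> t" using t u by (smt (verit) of_nat_0_le_iff mult_nonneg_nonneg)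
  define l where "l = 1 / u"
  have l1: "l \<le> 1" "0 < l" using u by (auto simp: l_def)
  have s1: "(\<lambda>k. pois t k * c + pois t k * l ^ k / l ^ m) sums (c + exp (t * (l - 1)) / l ^ m)"
  proof -
    have "(\<lambda>k. pois t k * l ^ k / l ^ m) sums (exp (t * (l - 1)) / l ^ m)"
      using sums_divide[OF pois_pgf[of t l], of "l^m"] .
    moreover have "(\<lambda>k. pois t k * c) sums c" using sums_mult2[OF pois_sums[of t], of c] by simp
    ultimately show ?thesis using sums_add by fastforce
  qed
  have s2: "summable (\<lambda>k. pois t k * a k)" by (rule summable_pois_bounded) (use t0 a in auto)
  have le: "pois t k * a k \<le> pois t k * c + pois t k * l ^ k / l ^ m" for k
  proof (cases "k < m")
    case True
    have "l ^ m \<le> l ^ k" using l1 True by (intro power_decreasing) auto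
    hence "1 \<le> l ^ k / l ^ m" using l1 by simp
    hence "a k \<le> l ^ k / l ^ m" using a(2)[of k] by linarith
    hence "pois t k * a k \<le> pois t k * (l ^ k / l ^ m)" using pois_nonneg[OF t0] by (metis mult_left_mono)
    moreover have "0 \<le> pois t k * c" using pois_nonneg[OF t0] c by simp
    ultimately show ?thesis by simp
  next
    case False
    have "pois t k * a k \<le> pois t k * c" using a(3)[of k] False pois_nonneg[OF t0] by (simp add: mult_left_mono)
    moreover have "0 \<le> pois t k * l ^ k / l ^ m" using pois_nonneg[OF t0] l1 by simp
    ultimately show ?thesis by simp
  qed
  have "(\<Sum>k. pois t k * a k) \<le> c + exp (t * (l - 1)) / l ^ m"
    using sums_le[OF _ summable_sums[OF s2] s1] le by blast
  moreover have "exp (t * (l - 1)) / l ^ m \<le> (u * exp (1 - u)) ^ m"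
  proof -
    have "exp (t * (l - 1)) \<le> exp (u * real m * (l - 1))" using t l1
      by (simp add: mult_right_mono_neg)
    also have "u * real m * (l - 1) = real m * (1 - u)" using u by (simp add: l_def field_simps)
    finally have "exp (t * (l - 1)) \<le> exp (real m * (1 - u))" .
    also have "exp (real m * (1 - u)) = exp (1 - u) ^ m" by (simp add: exp_of_nat_mult[symmetric])
    finally have "exp (t * (l - 1)) / l ^ m \<le> exp (1 - u) ^ m / l ^ m"
      using l1 by (simp add: divide_right_mono)
    also have "exp (1 - u) ^ m / l ^ m = (u * exp (1 - u)) ^ m" using u
      by (simp add: l_def power_divide power_mult_distrib field_simps)
    finally show ?thesis .
  qed
  ultimately show ?thesis by simp
qed



lemma stochD: assumes "stochastic S P" "x \<in> S" "y \<in> S" shows "0 \<le> P x y"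
  using assms by (auto simp: stochastic_def)

lemma stochD2: assumes "stochastic S P" "x \<in> S" shows "(\<Sum>y\<in>S. P x y) = 1"
  using assms by (auto simp: stochastic_def)

lemma mpow_nonneg: assumes "stochastic S P" "x \<in> S" shows "0 \<le> mpow P S k x y"
  using assms(2)
proof (induction k arbitrary: x)
  case 0 thus ?case by simp
next
  case (Suc k) thus ?case using stochD[OF assms(1)] by (auto intro!: sum_nonneg)
qed

lemma mpow_rowsum: assumes "finite S" "stochastic S P" "x \<in> S" shows "(\<Sum>y\<in>S. mpow P S k x y) = 1"
  using assms(3)
proof (induction k arbitrary: x)
  case 0 thus ?case using assms(1) by (simp add: sum.delta)
next
  case (Suc k)
  have "(\<Sum>y\<in>S. mpow P S (Suc k) x y) = (\<Sum>z\<in>S. P x z * (\<Sum>y\<in>S. mpow P S k z y))"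
    by (simp add: sum_distrib_left sum_distrib_right mult.assoc) (rule sum.swap)
  also have "\<dots> = (\<Sum>z\<in>S. P x z)" using Suc.IH by simp
  finally show ?case using stochD2[OF assms(2) Suc.prems] by simp
qed

lemma mpow_le1: assumes "finite S" "stochastic S P" "x \<in> S" "y \<in> S" shows "mpow P S k x y \<le> 1"
proof -
  have "mpow P S k x y \<le> (\<Sum>y\<in>S. mpow P S k x y)"
    using assms mpow_nonneg by (intro member_le_sum) auto
  thus ?thesis using mpow_rowsum[OF assms(1-3)] by simp
qed

lemma avoid_in: "y \<in> A \<Longrightarrow> avoid P S A k y = 0"
  by (cases k) auto

lemma avoid_bounds: assumes "stochastic S P" "x \<in> S"
  shows "0 \<le> avoid P S A k x \<and> avoid P S A k x \<le> 1"
  using assms(2)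
proof (induction k arbitrary: x)
  case 0 thus ?case by simp
next
  case (Suc k)
  show ?case
  proof (cases "x \<in> A")
    case True thus ?thesis by simp
  next
    case False
    have t: "0 \<le> P x y * avoid P S A k y \<and> P x y * avoid P S A k y \<le> P x y" if "y \<in> S" for y
    proof -
      have "0 \<le> P x y" using stochD[OF assms(1) Suc.prems that] .
      moreover have "0 \<le> avoid P S A k y \<and> avoid P S A k y \<le> 1" using Suc.IH[OF that] .
      ultimately show ?thesis by (simp add: mult_left_le)
    qed
    have "0 \<le> (\<Sum>y\<in>S. P x y * avoid P S A k y)"
      using t by (intro sum_nonneg) blast
    moreover have "(\<Sum>y\<in>S. P x y * avoid P S A k y) \<le> (\<Sum>y\<in>S. P x y)"
      using t by (intro sum_mono) blast
    ultimately show ?thesis using False stochD2[OF assms(1) Suc.prems] by simp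
  qed
qed

lemma avoid_mono_set: assumes "stochastic S P" "x \<in> S" "A \<subseteq> B"
  shows "avoid P S B k x \<le> avoid P S A k x"
  using assms(2)
proof (induction k arbitrary: x)
  case 0 thus ?case using assms(3) by auto
next
  case (Suc k)
  show ?case
  proof (cases "x \<in> B")
    case True thus ?thesis using avoid_bounds[OF assms(1) Suc.prems, of A "Suc k"] by simp
  next
    case False
    hence "x \<notin> A" using assms(3) by auto
    have "P x y * avoid P S B k y \<le> P x y * avoid P S A k y" if "y \<in> S" for y
      using Suc.IH[OF that] stochD[OF assms(1) Suc.prems that] by (rule mult_left_mono)
    hence "(\<Sum>y\<in>S. P x y * avoid P S B k y) \<le> (\<Sum>y\<in>S. P x y * avoid P S A k y)"
      by (intro sum_mono) blast
    thus ?thesis using False \<open>x \<notin> A\<close> by simp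
  qed
qed

lemma avoid_lyap:
  assumes st: "stochastic S P" and C: "C \<subseteq> S" "\<And>x. x \<in> C \<Longrightarrow> x \<notin> A"
    and cl: "\<And>x y. x \<in> C \<Longrightarrow> y \<in> S \<Longrightarrow> P x y \<noteq> 0 \<Longrightarrow> y \<in> A \<or> y \<in> C"
    and h: "\<And>x. x \<in> C \<Longrightarrow> 1 \<le> h x" "\<And>x. x \<in> C \<Longrightarrow> (\<Sum>y\<in>C. P x y * h y) \<le> \<rho> * h x"
    and rho: "0 \<le> \<rho>" and fin: "finite S"
  shows "x \<in> C \<Longrightarrow> avoid P S A k x \<le> \<rho> ^ k * h x"
proof (induction k arbitrary: x)
  case 0 thus ?case using h(1) C(2) by simp
next
  case (Suc k)
  have "avoid P S A (Suc k) x = (\<Sum>y\<in>S. P x y * avoid P S A k y)" using C(2)[OF Suc.prems] by simp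
  also have "\<dots> = (\<Sum>y\<in>C. P x y * avoid P S A k y)"
  proof (rule sum.mono_neutral_right[OF fin C(1)])
    show "\<forall>y\<in>S - C. P x y * avoid P S A k y = 0"
    proof
      fix y assume y: "y \<in> S - C"
      hence "P x y = 0 \<or> y \<in> A" using cl[OF Suc.prems, of y] by blast
      thus "P x y * avoid P S A k y = 0" using avoid_in[of y A P S k] by auto
    qed
  qed
  also have "\<dots> \<le> (\<Sum>y\<in>C. P x y * (\<rho> ^ k * h y))"
  proof (rule sum_mono)
    fix y assume "y \<in> C"
    thus "P x y * avoid P S A k y \<le> P x y * (\<rho> ^ k * h y)"
      using Suc.IH C(1) st Suc.prems by (intro mult_left_mono) (auto intro: stochD)
  qed
  also have "\<dots> = \<rho> ^ k * (\<Sum>y\<in>C. P x y * h y)" by (simp add: sum_distrib_left algebra_simps)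
  also have "\<dots> \<le> \<rho> ^ k * (\<rho> * h x)" using h(2)[OF Suc.prems] rho by (simp add: mult_left_mono)
  finally show ?case by (simp add: mult.assoc mult.left_commute)
qed

lemma avoid_super:
  assumes st: "stochastic S P" and C: "C \<subseteq> S" "\<And>x. x \<in> C \<Longrightarrow> x \<notin> A"
    and cl: "\<And>x y. x \<in> C \<Longrightarrow> y \<in> S \<Longrightarrow> P x y \<noteq> 0 \<Longrightarrow> y \<in> A \<or> y \<in> C"
    and V: "\<And>x. x \<in> C \<Longrightarrow> 0 \<le> V x" "\<And>x. x \<in> C \<Longrightarrow> 1 + (\<Sum>y\<in>C. P x y * V y) \<le> V x"
    and fin: "finite S"
  shows "x \<in> C \<Longrightarrow> (\<Sum>k<m. avoid P S A k x) \<le> V x"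
proof (induction m arbitrary: x)
  case 0 thus ?case using V(1) by simp
next
  case (Suc m)
  have "(\<Sum>k<Suc m. avoid P S A k x) = avoid P S A 0 x + (\<Sum>k<m. avoid P S A (Suc k) x)"
    by (rule sum.lessThan_Suc_shift)
  also have "\<dots> = 1 + (\<Sum>k<m. \<Sum>y\<in>S. P x y * avoid P S A k y)" using C(2)[OF Suc.prems] by simp
  also have "(\<Sum>k<m. \<Sum>y\<in>S. P x y * avoid P S A k y) = (\<Sum>y\<in>S. P x y * (\<Sum>k<m. avoid P S A k y))"
    by (simp add: sum_distrib_left) (rule sum.swap)
  also have "\<dots> = (\<Sum>y\<in>C. P x y * (\<Sum>k<m. avoid P S A k y))"
  proof (rule sum.mono_neutral_right[OF fin C(1)])
    show "\<forall>y\<in>S - C. P x y * (\<Sum>k<m. avoid P S A k y) = 0"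
    proof
      fix y assume y: "y \<in> S - C"
      hence "P x y = 0 \<or> y \<in> A" using cl[OF Suc.prems, of y] by blast
      thus "P x y * (\<Sum>k<m. avoid P S A k y) = 0" using avoid_in[of y A P S] by auto
    qed
  qed
  also have "\<dots> \<le> (\<Sum>y\<in>C. P x y * V y)"
  proof (rule sum_mono)
    fix y assume "y \<in> C"
    thus "P x y * (\<Sum>k<m. avoid P S A k y) \<le> P x y * V y"
      using Suc.IH C(1) st Suc.prems by (intro mult_left_mono) (auto intro: stochD)
  qed
  finally show ?case using V(2)[OF Suc.prems] by simp
qed

lemma avoid_summable_bound:
  assumes "\<And>k. 0 \<le> a k" "\<And>m. (\<Sum>k<m. a k) \<le> (V::real)"
  shows "summable a" "suminf a \<le> V"
proof -
  show "summable a" using assms by (intro summableI_nonneg_bounded) auto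
  thus "suminf a \<le> V" using assms by (intro suminf_le_const) auto
qed

lemma hit_gt_eq: "0 \<le> t \<Longrightarrow> hit_gt P S A x t = (\<Sum>k. pois t k * avoid P S A k x)"
  by (simp add: hit_gt_def pois_def)

lemma pois_has_integral: "((\<lambda>t. pois t k) has_integral 1) {0..}"
proof -
  have "((\<lambda>t. t powr (real k + 1 - 1) / exp t) has_integral Gamma (real k + 1)) {0..}"
    by (rule Gamma_integral_real) simp
  moreover have "Gamma (real k + 1) = fact k" using Gamma_fact[of k] by (simp add: add.commute)
  ultimately have "((\<lambda>t. t powr real k / exp t) has_integral fact k) {0..}" by simp
  hence "((\<lambda>t. (t powr real k / exp t) / fact k) has_integral fact k / fact k) {0..}"
    by (rule has_integral_divide)
  hence i: "((\<lambda>t. (t powr real k / exp t) / fact k) has_integral 1) {0..}" by simp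
  show ?thesis
  proof (rule has_integral_spike[OF negligible_sing _ i])
    fix t assume "t \<in> {0::real..} - {0}"
    hence "t > 0" by auto
    thus "pois t k = t powr real k / exp t / fact k"
      by (simp add: pois_def powr_realpow exp_minus field_simps)
  qed
qed

lemma hit_exp_eq:
  assumes st: "stochastic S P" and x: "x \<in> S" and sm: "summable (\<lambda>k. avoid P S A k x)"
  shows "hit_exp P S A x = (\<Sum>k. avoid P S A k x)"
proof -
  define a where "a k = avoid P S A k x" for k
  have a01: "0 \<le> a k" "a k \<le> 1" for k using avoid_bounds[OF st x] by (auto simp: a_def)
  define f where "f m t = (\<Sum>k<m. pois t k * a k)" for m t
  have intf: "((f m) has_integral (\<Sum>k<m. a k)) {0..}" for m
    unfolding f_def
  proof (intro has_integral_sum)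
    fix k show "((\<lambda>t. pois t k * a k) has_integral a k) {0..}"
      using has_integral_mult_left[OF pois_has_integral[of k], of "a k"] by simp
  qed simp
  have mono: "f m t \<le> f (Suc m) t" if "t \<in> {0..}" for m t
    using that a01 pois_nonneg[of t] by (simp add: f_def)
  have conv: "(\<lambda>m. f m t) \<longlonglongrightarrow> hit_gt P S A x t" if "t \<in> {0..}" for t
  proof -
    have "summable (\<lambda>k. pois t k * a k)" using that a01 by (intro summable_pois_bounded) auto
    hence "(\<lambda>m. f m t) \<longlonglongrightarrow> (\<Sum>k. pois t k * a k)" unfolding f_def by (rule summable_LIMSEQ)
    thus ?thesis using hit_gt_eq[of t P S A x] that by (simp add: a_def)
  qed
  have bnd: "bounded (range (\<lambda>m. integral {0..} (f m)))"
  proof -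
    have "norm (integral {0..} (f m)) \<le> suminf a" for m
    proof -
      have "integral {0..} (f m) = (\<Sum>k<m. a k)" using intf[of m] by (rule integral_unique)
      moreover have "(\<Sum>k<m. a k) \<le> suminf a" using sm a01 by (intro sum_le_suminf) (auto simp: a_def)
      moreover have "0 \<le> (\<Sum>k<m. a k)" using a01 by (intro sum_nonneg) auto
      ultimately show ?thesis by simp
    qed
    thus ?thesis by (auto simp: bounded_iff)
  qed
  have "(\<lambda>m. integral {0..} (f m)) \<longlonglongrightarrow> integral {0..} (hit_gt P S A x)"
  proof -
    have "\<And>m. (f m) integrable_on {0..}" using intf by blast
    from monotone_convergence_increasing[of f "{0..}" "hit_gt P S A x", OF this mono conv bnd]
    show ?thesis by (rule conjunct2)
  qed
  moreover have "(\<lambda>m. integral {0..} (f m)) = (\<lambda>m. \<Sum>k<m. a k)"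
    using intf by (intro ext integral_unique) 
  moreover have "(\<lambda>m. \<Sum>k<m. a k) \<longlonglongrightarrow> suminf a" using sm unfolding a_def[abs_def] by (rule summable_LIMSEQ)
  ultimately have "integral {0..} (hit_gt P S A x) = suminf a" using LIMSEQ_unique by metis
  thus ?thesis unfolding hit_exp_def a_def[abs_def] by simp
qed



lemma heat_eq: "heat P S t x y = (\<Sum>k. pois t k * mpow P S k x y)"
  by (simp add: heat_def pois_def)

lemma summable_heat: assumes "finite S" "stochastic S P" "x \<in> S" "y \<in> S" "0 \<le> t"
  shows "summable (\<lambda>k. pois t k * mpow P S k x y)"
  using assms by (intro summable_pois_bounded) (auto intro: mpow_nonneg mpow_le1)

lemma heat_nonneg: assumes "finite S" "stochastic S P" "x \<in> S" "y \<in> S" "0 \<le> t"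
  shows "0 \<le> heat P S t x y"
  unfolding heat_eq using assms
  by (intro suminf_nonneg summable_heat) (auto intro!: mult_nonneg_nonneg pois_nonneg mpow_nonneg)

lemma heat_rowsum: assumes fin: "finite S" and st: "stochastic S P" and x: "x \<in> S" and t: "0 \<le> t"
  shows "(\<Sum>y\<in>S. heat P S t x y) = 1"
proof -
  have "(\<Sum>y\<in>S. heat P S t x y) = (\<Sum>y\<in>S. \<Sum>k. pois t k * mpow P S k x y)" by (simp add: heat_eq)
  also have "\<dots> = (\<Sum>k. \<Sum>y\<in>S. pois t k * mpow P S k x y)"
    using summable_heat[OF fin st x _ t] by (intro suminf_sum[symmetric]) auto
  also have "(\<lambda>k. \<Sum>y\<in>S. pois t k * mpow P S k x y) = (\<lambda>k. pois t k)"
    by (simp add: sum_distrib_left[symmetric] mpow_rowsum[OF fin st x])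
  finally show ?thesis using pois_sums[of t] by (simp add: sums_iff)
qed

lemma mpow_le_avoid: assumes fin: "finite S" and st: "stochastic S P" and z: "z \<in> S"
  shows "x \<in> S \<Longrightarrow> mpow P S k x z \<le> 1 - avoid P S {z} k x"
proof (induction k arbitrary: x)
  case 0 thus ?case by simp
next
  case (Suc k)
  show ?case
  proof (cases "x = z")
    case True thus ?thesis using mpow_le1[OF fin st Suc.prems z, of "Suc k"] by simp
  next
    case False
    have "mpow P S (Suc k) x z = (\<Sum>y\<in>S. P x y * mpow P S k y z)" by simp
    also have "\<dots> \<le> (\<Sum>y\<in>S. P x y * (1 - avoid P S {z} k y))"
      using Suc.IH stochD[OF st Suc.prems] by (intro sum_mono mult_left_mono) auto
    also have "\<dots> = (\<Sum>y\<in>S. P x y) - (\<Sum>y\<in>S. P x y * avoid P S {z} k y)"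
      by (simp add: algebra_simps sum_subtractf)
    also have "\<dots> = 1 - avoid P S {z} (Suc k) x" using False stochD2[OF st Suc.prems] by simp
    finally show ?thesis .
  qed
qed

lemma mpow_ge_avoid: assumes fin: "finite S" and st: "stochastic S P" and z: "z \<in> S"
  shows "x \<in> S \<Longrightarrow> (1 - avoid P S {z} k x) * P z z ^ k \<le> mpow P S k x z"
proof (induction k arbitrary: x)
  case 0 thus ?case by simp
next
  case (Suc k)
  have q: "0 \<le> P z z" "P z z \<le> 1"
  proof -
    show "0 \<le> P z z" using stochD[OF st z z] .
    have "P z z \<le> (\<Sum>y\<in>S. P z y)" using stochD[OF st z] fin z by (intro member_le_sum) auto
    thus "P z z \<le> 1" using stochD2[OF st z] by simp
  qed
  have nn: "\<And>y. y \<in> S \<Longrightarrow> 0 \<le> P x y * mpow P S k y z"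
    using stochD[OF st Suc.prems] mpow_nonneg[OF st] by (simp add: mult_nonneg_nonneg)
  show ?case
  proof (cases "x = z")
    case True
    have "P z z * mpow P S k z z \<le> (\<Sum>y\<in>S. P z y * mpow P S k y z)"
      using nn fin z True by (intro member_le_sum[where f = "\<lambda>y. P z y * mpow P S k y z"]) auto
    moreover have "P z z ^ k \<le> mpow P S k z z" using Suc.IH[OF z] avoid_in[of z "{z}" P S k] by simp
    hence "P z z * P z z ^ k \<le> P z z * mpow P S k z z" using q by (simp add: mult_left_mono)
    ultimately show ?thesis using True by simp
  next
    case False
    have "(1 - avoid P S {z} (Suc k) x) * P z z ^ Suc k \<le> (1 - avoid P S {z} (Suc k) x) * P z z ^ k"
    proof (rule mult_left_mono)
      show "P z z ^ Suc k \<le> P z z ^ k" using q by (simp add: mult_left_le_one_le)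
      show "0 \<le> 1 - avoid P S {z} (Suc k) x" using avoid_bounds[OF st Suc.prems, of "{z}" "Suc k"] by linarith
    qed
    also have eq: "(1 - avoid P S {z} (Suc k) x) * P z z ^ k = (\<Sum>y\<in>S. P x y * (1 - avoid P S {z} k y)) * P z z ^ k"
      using False stochD2[OF st Suc.prems] by (simp add: algebra_simps sum_subtractf)
    also have "(\<Sum>y\<in>S. P x y * (1 - avoid P S {z} k y)) * P z z ^ k
        = (\<Sum>y\<in>S. P x y * ((1 - avoid P S {z} k y) * P z z ^ k))"
      by (simp add: sum_distrib_right mult.assoc)
    also have "\<dots> \<le> (\<Sum>y\<in>S. P x y * mpow P S k y z)"
      using Suc.IH stochD[OF st Suc.prems] by (intro sum_mono mult_left_mono) auto
    also have "\<dots> = mpow P S (Suc k) x z" by simp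
    finally show ?thesis .
  qed
qed

lemma heat_z_upper: assumes fin: "finite S" and st: "stochastic S P" and z: "z \<in> S" and x: "x \<in> S"
  and t: "0 \<le> t"
  shows "heat P S t x z \<le> 1 - hit_gt P S {z} x t"
proof -
  have s1: "summable (\<lambda>k. pois t k * avoid P S {z} k x)"
    using avoid_bounds[OF st x] t by (intro summable_pois_bounded) auto
  have "heat P S t x z \<le> (\<Sum>k. pois t k - pois t k * avoid P S {z} k x)"
    unfolding heat_eq
  proof (rule suminf_le)
    fix k show "pois t k * mpow P S k x z \<le> pois t k - pois t k * avoid P S {z} k x"
    proof -
      have "pois t k * mpow P S k x z \<le> pois t k * (1 - avoid P S {z} k x)"
        using mpow_le_avoid[OF fin st z x, of k] pois_nonneg[OF t, of k] by (rule mult_left_mono)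
      thus ?thesis by (simp add: right_diff_distrib)
    qed
    show "summable (\<lambda>k. pois t k * mpow P S k x z)" by (rule summable_heat[OF fin st x z t])
    show "summable (\<lambda>k. pois t k - pois t k * avoid P S {z} k x)"
      using pois_sums[of t] s1 by (intro summable_diff) (auto simp: sums_iff)
  qed
  also have "\<dots> = 1 - hit_gt P S {z} x t"
    using suminf_diff[OF _ s1, of "pois t"] pois_sums[of t] hit_gt_eq[OF t] by (simp add: sums_iff)
  finally show ?thesis .
qed

lemma heat_z_lower: assumes fin: "finite S" and st: "stochastic S P" and z: "z \<in> S" and x: "x \<in> S"
  and t: "0 \<le> t"
  shows "1 - hit_gt P S {z} x t - t * (1 - P z z) \<le> heat P S t x z"
proof -
  have q: "0 \<le> P z z" "P z z \<le> 1"
  proof -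
    show "0 \<le> P z z" using stochD[OF st z z] .
    have "P z z \<le> (\<Sum>y\<in>S. P z y)" using stochD[OF st z] fin z by (intro member_le_sum) auto
    thus "P z z \<le> 1" using stochD2[OF st z] by simp
  qed
  have s1: "summable (\<lambda>k. pois t k * avoid P S {z} k x)"
    using avoid_bounds[OF st x] t by (intro summable_pois_bounded) auto
  have s2: "(\<lambda>k. pois t k * P z z ^ k - pois t k * avoid P S {z} k x) sums
      (exp (t * (P z z - 1)) - hit_gt P S {z} x t)"
    using sums_diff[OF pois_pgf[of t "P z z"] summable_sums[OF s1]] hit_gt_eq[OF t] by simp
  have "exp (t * (P z z - 1)) - hit_gt P S {z} x t \<le> heat P S t x z"
    unfolding heat_eq
  proof (rule sums_le[OF _ s2 summable_sums[OF summable_heat[OF fin st x z t]]])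
    fix k
    have a: "0 \<le> avoid P S {z} k x" "avoid P S {z} k x \<le> 1" using avoid_bounds[OF st x] by auto
    have qk: "0 \<le> P z z ^ k" "P z z ^ k \<le> 1" using q by (auto simp: power_le_one)
    have "P z z ^ k - avoid P S {z} k x \<le> (1 - avoid P S {z} k x) * P z z ^ k"
    proof -
      have "P z z ^ k * avoid P S {z} k x \<le> avoid P S {z} k x" using a qk by (simp add: mult_left_le_one_le)
      thus ?thesis by (simp add: algebra_simps)
    qed
    also have "\<dots> \<le> mpow P S k x z" by (rule mpow_ge_avoid[OF fin st z x])
    finally have "P z z ^ k - avoid P S {z} k x \<le> mpow P S k x z" .
    hence "pois t k * (P z z ^ k - avoid P S {z} k x) \<le> pois t k * mpow P S k x z"
      using pois_nonneg[OF t] by (simp add: mult_left_mono)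
    thus "pois t k * P z z ^ k - pois t k * avoid P S {z} k x \<le> pois t k * mpow P S k x z"
      by (simp add: right_diff_distrib)
  qed
  moreover have "1 + t * (P z z - 1) \<le> exp (t * (P z z - 1))" by (rule exp_ge_add_one_self)
  ultimately show ?thesis by (simp add: algebra_simps)
qed

lemma tv_lower: assumes "finite S" "z \<in> S"
  shows "\<bar>nu z - mu z\<bar> \<le> tv_dist S nu mu"
proof -
  have "\<bar>(\<Sum>y\<in>{z}. nu y) - (\<Sum>y\<in>{z}. mu y)\<bar> \<in> (\<lambda>B. \<bar>sum nu B - sum mu B\<bar>) ` Pow S"
    using assms by (intro image_eqI[where x="{z}"]) auto
  hence "\<bar>(\<Sum>y\<in>{z}. nu y) - (\<Sum>y\<in>{z}. mu y)\<bar> \<le> tv_dist S nu mu"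
    unfolding tv_dist_def using assms(1) by (intro Max_ge) auto
  thus ?thesis by simp
qed

lemma tv_upper: assumes fin: "finite S" and z: "z \<in> S"
  and nu: "\<And>y. y \<in> S \<Longrightarrow> 0 \<le> nu y" "(\<Sum>y\<in>S. nu y) = 1"
  and mu: "\<And>y. y \<in> S \<Longrightarrow> 0 \<le> mu y" "(\<Sum>y\<in>S. mu y) = 1"
  shows "tv_dist S nu mu \<le> (1 - mu z) + (1 - nu z)"
  unfolding tv_dist_def
proof (subst Max_le_iff)
  show "finite ((\<lambda>B. \<bar>sum nu B - sum mu B\<bar>) ` Pow S)" using fin by simp
  show "(\<lambda>B. \<bar>sum nu B - sum mu B\<bar>) ` Pow S \<noteq> {}" by blast
  show "\<forall>a\<in>(\<lambda>B. \<bar>sum nu B - sum mu B\<bar>) ` Pow S. a \<le> 1 - mu z + (1 - nu z)"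
  proof
    fix a assume "a \<in> (\<lambda>B. \<bar>sum nu B - sum mu B\<bar>) ` Pow S"
    then obtain B where B: "B \<subseteq> S" and a: "a = \<bar>sum nu B - sum mu B\<bar>" by auto
    have finB: "finite B" using B fin finite_subset by blast
    have nuB: "0 \<le> sum nu B" "sum nu B \<le> 1" and muB: "0 \<le> sum mu B" "sum mu B \<le> 1"
    proof -
      show "0 \<le> sum nu B" using B nu by (intro sum_nonneg) auto
      show "0 \<le> sum mu B" using B mu by (intro sum_nonneg) auto
      show "sum nu B \<le> 1" using nu sum_mono2[OF fin B, of nu] by auto
      show "sum mu B \<le> 1" using mu sum_mono2[OF fin B, of mu] by auto
    qed
    have mz: "mu z \<le> 1" "0 \<le> mu z" "nu z \<le> 1" "0 \<le> nu z"
      using nuB muB sum_mono2[OF fin, of "{z}" mu] sum_mono2[OF fin, of "{z}" nu] z mu nu by auto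
    show "a \<le> 1 - mu z + (1 - nu z)"
    proof (cases "z \<in> B")
      case True
      have "mu z \<le> sum mu B" using True mu B finB by (intro member_le_sum) auto
      moreover have "nu z \<le> sum nu B" using True nu B finB by (intro member_le_sum) auto
      ultimately show ?thesis using a nuB muB mz by auto
    next
      case False
      have "sum nu B \<le> sum nu (S - {z})" using B False nu fin by (intro sum_mono2) auto
      moreover have "sum nu (S - {z}) = 1 - nu z" using nu(2) sum_diff1[OF fin, of nu] z by simp
      moreover have "sum mu B \<le> sum mu (S - {z})" using B False mu fin by (intro sum_mono2) auto
      moreover have "sum mu (S - {z}) = 1 - mu z" using mu(2) sum_diff1[OF fin, of mu] z by simp
      ultimately show ?thesis using a nuB muB mz by auto
    qed
  qed
qed

lemma dist_lower: assumes fin: "finite S" and st: "stochastic S P" and z: "z \<in> S" and x: "x \<in> S"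
  and t: "0 \<le> t"
  shows "mu z - 1 + hit_gt P S {z} x t \<le> dist_stat S P mu t"
proof -
  have "\<bar>heat P S t x z - mu z\<bar> \<le> tv_dist S (heat P S t x) mu" by (rule tv_lower[OF fin z])
  also have "\<dots> \<le> dist_stat S P mu t" unfolding dist_stat_def using fin x by (intro Max_ge) auto
  finally show ?thesis using heat_z_upper[OF fin st z x t] by linarith
qed

lemma dist_upper: assumes fin: "finite S" and st: "stochastic S P" and z: "z \<in> S" and t: "0 \<le> t"
  and mu: "\<And>y. y \<in> S \<Longrightarrow> 0 \<le> mu y" "(\<Sum>y\<in>S. mu y) = 1"
  and b: "\<And>x. x \<in> S \<Longrightarrow> hit_gt P S {z} x t \<le> b"
  shows "dist_stat S P mu t \<le> (1 - mu z) + b + t * (1 - P z z)"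
  unfolding dist_stat_def
proof (subst Max_le_iff)
  show "finite ((\<lambda>x. tv_dist S (heat P S t x) mu) ` S)" using fin by simp
  show "(\<lambda>x. tv_dist S (heat P S t x) mu) ` S \<noteq> {}" using z by auto
  show "\<forall>a\<in>(\<lambda>x. tv_dist S (heat P S t x) mu) ` S. a \<le> 1 - mu z + b + t * (1 - P z z)"
  proof
    fix a assume "a \<in> (\<lambda>x. tv_dist S (heat P S t x) mu) ` S"
    then obtain x where x: "x \<in> S" and a: "a = tv_dist S (heat P S t x) mu" by auto
    have "a \<le> (1 - mu z) + (1 - heat P S t x z)"
      unfolding a using heat_nonneg[OF fin st x _ t] heat_rowsum[OF fin st x t] mu
      by (intro tv_upper[OF fin z]) auto
    also have "\<dots> \<le> (1 - mu z) + b + t * (1 - P z z)"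
      using heat_z_lower[OF fin st z x t] b[OF x] by linarith
    finally show "a \<le> 1 - mu z + b + t * (1 - P z z)" .
  qed
qed

lemma tmix_le: assumes "0 \<le> t" "dist_stat S P mu t \<le> eps" shows "tmix S P mu eps \<le> t"
  unfolding tmix_def by (rule cInf_lower) (use assms in \<open>auto intro: bdd_belowI[of _ 0]\<close>)

lemma tmix_ge: assumes ne: "0 \<le> t1" "dist_stat S P mu t1 \<le> eps"
  and lt: "\<And>t. 0 \<le> t \<Longrightarrow> t < t2 \<Longrightarrow> eps < dist_stat S P mu t"
  shows "t2 \<le> tmix S P mu eps"
  unfolding tmix_def
proof (rule cInf_greatest)
  show "{t. 0 \<le> t \<and> dist_stat S P mu t \<le> eps} \<noteq> {}" using ne by auto
  fix x assume "x \<in> {t. 0 \<le> t \<and> dist_stat S P mu t \<le> eps}"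
  thus "t2 \<le> x" using lt by force
qed



section \<open>Spectral gap\<close>

lemma stationary: assumes fin: "finite S" and st: "stochastic S P" and rv: "reversible_chain S P mu"
  and y: "y \<in> S"
  shows "(\<Sum>x\<in>S. mu x * P x y) = mu y"
proof -
  have "(\<Sum>x\<in>S. mu x * P x y) = (\<Sum>x\<in>S. mu y * P y x)"
    using rv y by (intro sum.cong) (auto simp: reversible_chain_def)
  also have "\<dots> = mu y" using stochD2[OF st y] by (simp add: sum_distrib_left[symmetric])
  finally show ?thesis .
qed

lemma amgm: fixes a b p q :: real assumes "0 < p" "0 < q" shows "a * b \<le> (a^2 * (q / p) + b^2 * (p / q)) / 2"
proof -
  have "0 \<le> (a * q - b * p)^2" by simp
  hence "2 * (a * b) * (p * q) \<le> a^2 * q^2 + b^2 * p^2" by (simp add: power2_eq_square algebra_simps)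
  hence "2 * (a * b) \<le> (a^2 * q^2 + b^2 * p^2) / (p * q)" using assms by (simp add: field_simps)
  also have "(a^2 * q^2 + b^2 * p^2) / (p * q) = a^2 * (q / p) + b^2 * (p / q)"
    using assms by (simp add: field_simps power2_eq_square)
  finally show ?thesis by simp
qed

lemma quad_bound:
  assumes fin: "finite S" and st: "stochastic S P" and mu: "\<And>x. x \<in> S \<Longrightarrow> 0 \<le> mu x"
    and rv: "reversible_chain S P mu" and z: "z \<in> S"
    and h: "\<And>x. x \<in> S - {z} \<Longrightarrow> 0 < h x"
    and ly: "\<And>x. x \<in> S - {z} \<Longrightarrow> (\<Sum>y\<in>S - {z}. P x y * h y) \<le> \<rho> * h x"
    and g: "g z = 0"
  shows "(\<Sum>x\<in>S. mu x * g x * (\<Sum>y\<in>S. P x y * g y)) \<le> \<rho> * (\<Sum>x\<in>S. mu x * (g x)^2)"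
proof -
  define T where "T = S - {z}"
  have finT: "finite T" using fin by (simp add: T_def)
  define w where "w x y = mu x * P x y" for x y
  have wsym: "w x y = w y x" if "x \<in> T" "y \<in> T" for x y
    using rv that by (auto simp: w_def reversible_chain_def T_def)
  have wnn: "0 \<le> w x y" if "x \<in> T" "y \<in> T" for x y
    using mu[of x] stochD[OF st, of x y] that by (auto simp: w_def T_def)
  have red: "(\<Sum>x\<in>S. F x) = (\<Sum>x\<in>T. F x)" if "F z = 0" for F :: "nat \<Rightarrow> real"
    using that fin z by (simp add: T_def sum_diff1)
  define U where "U x y = w x y * ((g x)^2 * (h y / h x))" for x y
  have "(\<Sum>x\<in>S. mu x * g x * (\<Sum>y\<in>S. P x y * g y)) = (\<Sum>x\<in>T. mu x * g x * (\<Sum>y\<in>T. P x y * g y))"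
    using g by (simp add: red)
  also have "\<dots> = (\<Sum>x\<in>T. \<Sum>y\<in>T. w x y * (g x * g y))"
  proof (rule sum.cong[OF refl])
    fix x show "mu x * g x * (\<Sum>y\<in>T. P x y * g y) = (\<Sum>y\<in>T. w x y * (g x * g y))"
      unfolding sum_distrib_left by (rule sum.cong[OF refl]) (simp add: w_def)
  qed
  also have "\<dots> \<le> (\<Sum>x\<in>T. \<Sum>y\<in>T. (U x y + U y x) / 2)"
  proof (rule sum_mono, rule sum_mono)
    fix x y assume x: "x \<in> T" and y: "y \<in> T"
    have "w x y * (g x * g y) \<le> w x y * (((g x)^2 * (h y / h x) + (g y)^2 * (h x / h y)) / 2)"
      using wnn[OF x y] h x y amgm[of "h x" "h y" "g x" "g y"] by (intro mult_left_mono) (auto simp: T_def)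
    also have "\<dots> = (U x y + U y x) / 2" using wsym[OF x y] by (simp add: U_def algebra_simps)
    finally show "w x y * (g x * g y) \<le> (U x y + U y x) / 2" .
  qed
  also have "\<dots> = ((\<Sum>x\<in>T. \<Sum>y\<in>T. U x y) + (\<Sum>x\<in>T. \<Sum>y\<in>T. U y x)) / 2"
    by (simp only: sum_divide_distrib[symmetric] sum.distrib)
  also have "(\<Sum>x\<in>T. \<Sum>y\<in>T. U y x) = (\<Sum>x\<in>T. \<Sum>y\<in>T. U x y)"
    by (rule sum.swap)
  finally have "(\<Sum>x\<in>S. mu x * g x * (\<Sum>y\<in>S. P x y * g y)) \<le> (\<Sum>x\<in>T. \<Sum>y\<in>T. U x y)"
    by simp
  also have "\<dots> = (\<Sum>x\<in>T. mu x * (g x)^2 / h x * (\<Sum>y\<in>T. P x y * h y))"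
  proof (rule sum.cong[OF refl])
    fix x show "(\<Sum>y\<in>T. U x y) = mu x * (g x)^2 / h x * (\<Sum>y\<in>T. P x y * h y)"
      unfolding sum_distrib_left by (rule sum.cong[OF refl]) (simp add: U_def w_def)
  qed
  also have "\<dots> \<le> (\<Sum>x\<in>T. mu x * (g x)^2 / h x * (\<rho> * h x))"
  proof (rule sum_mono)
    fix x assume x: "x \<in> T"
    have "0 \<le> mu x * (g x)^2 / h x" using h[of x] mu[of x] x by (auto simp: T_def)
    thus "mu x * (g x)^2 / h x * (\<Sum>y\<in>T. P x y * h y) \<le> mu x * (g x)^2 / h x * (\<rho> * h x)"
      using ly[of x] x by (intro mult_left_mono) (auto simp: T_def)
  qed
  also have "\<dots> = \<rho> * (\<Sum>x\<in>T. mu x * (g x)^2)"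
    unfolding sum_distrib_left
  proof (rule sum.cong[OF refl])
    fix x assume "x \<in> T"
    hence "h x > 0" using h by (auto simp: T_def)
    thus "mu x * (g x)^2 / h x * (\<rho> * h x) = \<rho> * (mu x * (g x)^2)" by (simp add: field_simps)
  qed
  also have "(\<Sum>x\<in>T. mu x * (g x)^2) = (\<Sum>x\<in>S. mu x * (g x)^2)"
    using g by (simp add: red)
  finally show ?thesis .
qed

lemma eig_le:
  assumes fin: "finite S" and st: "stochastic S P" and mu: "\<And>x. x \<in> S \<Longrightarrow> 0 < mu x"
    and rv: "reversible_chain S P mu" and z: "z \<in> S"
    and h: "\<And>x. x \<in> S - {z} \<Longrightarrow> 0 < h x"
    and ly: "\<And>x. x \<in> S - {z} \<Longrightarrow> (\<Sum>y\<in>S - {z}. P x y * h y) \<le> \<rho> * h x"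
    and rho: "\<rho> \<le> 1"
    and f: "\<And>x. x \<in> S \<Longrightarrow> (\<Sum>y\<in>S. P x y * f y) = l * f x" and x0: "x0 \<in> S" "f x0 \<noteq> 0"
    and l: "l \<noteq> 1"
  shows "l \<le> \<rho>"
proof -
  define M where "M = (\<Sum>x\<in>S. mu x * f x)"
  define F where "F = (\<Sum>x\<in>S. mu x * (f x)^2)"
  define W where "W = (\<Sum>x\<in>S. mu x)"
  define c where "c = f z"
  have "l * M = (\<Sum>x\<in>S. mu x * (\<Sum>y\<in>S. P x y * f y))" using f by (simp add: M_def sum_distrib_left algebra_simps)
  also have "\<dots> = (\<Sum>y\<in>S. (\<Sum>x\<in>S. mu x * P x y) * f y)"
    by (simp add: sum_distrib_left sum_distrib_right algebra_simps) (rule sum.swap)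
  also have "\<dots> = M" using stationary[OF fin st rv] by (simp add: M_def)
  finally have M0: "M = 0" using l by (metis mult_cancel_right1)
  have W0: "0 \<le> W" unfolding W_def by (rule sum_nonneg) (use mu in \<open>auto intro: less_imp_le\<close>)
  have F0: "0 < F"
  proof -
    have "mu x0 * (f x0)^2 \<le> F" unfolding F_def using fin x0 mu by (intro member_le_sum) (auto intro!: mult_nonneg_nonneg intro: less_imp_le)
    moreover have "0 < mu x0 * (f x0)^2" using mu[OF x0(1)] x0(2) by simp
    ultimately show ?thesis by linarith
  qed
  define g where "g x = f x - c" for x
  have Pg: "(\<Sum>y\<in>S. P x y * g y) = l * f x - c" if "x \<in> S" for x
    using f[OF that] stochD2[OF st that] by (simp add: g_def algebra_simps sum_subtractf sum_distrib_left[symmetric])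
  have "(\<Sum>x\<in>S. mu x * g x * (\<Sum>y\<in>S. P x y * g y)) \<le> \<rho> * (\<Sum>x\<in>S. mu x * (g x)^2)"
    using mu by (intro quad_bound[OF fin st _ rv z h ly]) (auto simp: g_def c_def intro: less_imp_le)
  moreover have "(\<Sum>x\<in>S. mu x * g x * (\<Sum>y\<in>S. P x y * g y)) = l * F - c * (l + 1) * M + c^2 * W"
  proof -
    have "(\<Sum>x\<in>S. mu x * g x * (\<Sum>y\<in>S. P x y * g y)) = (\<Sum>x\<in>S. l * (mu x * (f x)^2) - c * (l + 1) * (mu x * f x) + c^2 * mu x)"
    proof (rule sum.cong[OF refl])
      fix x assume x: "x \<in> S"
      show "mu x * g x * (\<Sum>y\<in>S. P x y * g y) = l * (mu x * (f x)^2) - c * (l + 1) * (mu x * f x) + c^2 * mu x"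
        by (subst Pg[OF x]) (simp add: g_def power2_eq_square algebra_simps)
    qed
    also have "\<dots> = l * F - c * (l + 1) * M + c^2 * W"
      by (simp add: F_def M_def W_def sum.distrib sum_subtractf sum_distrib_left)
    finally show ?thesis .
  qed
  moreover have "(\<Sum>x\<in>S. mu x * (g x)^2) = F - 2 * c * M + c^2 * W"
  proof -
    have "(\<Sum>x\<in>S. mu x * (g x)^2) = (\<Sum>x\<in>S. mu x * (f x)^2 - 2 * c * (mu x * f x) + c^2 * mu x)"
      by (intro sum.cong) (auto simp: g_def power2_eq_square algebra_simps)
    also have "\<dots> = F - 2 * c * M + c^2 * W"
      by (simp add: F_def M_def W_def sum.distrib sum_subtractf sum_distrib_left)
    finally show ?thesis .
  qed
  ultimately have "l * F + c^2 * W \<le> \<rho> * (F + c^2 * W)" using M0 by simp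
  hence "(l - \<rho>) * F \<le> (\<rho> - 1) * (c^2 * W)" by (simp add: algebra_simps)
  also have "\<dots> \<le> 0" using rho W0 by (simp add: mult_nonpos_nonneg)
  finally show ?thesis using F0 by (simp add: mult_le_0_iff)
qed

lemma harm_const:
  assumes fin: "finite S" and st: "stochastic S P" and mu: "\<And>x. x \<in> S \<Longrightarrow> 0 < mu x"
    and rv: "reversible_chain S P mu" and z: "z \<in> S"
    and h: "\<And>x. x \<in> S - {z} \<Longrightarrow> 0 < h x"
    and ly: "\<And>x. x \<in> S - {z} \<Longrightarrow> (\<Sum>y\<in>S - {z}. P x y * h y) \<le> \<rho> * h x"
    and rho: "\<rho> < 1"
    and f: "\<And>x. x \<in> S \<Longrightarrow> (\<Sum>y\<in>S. P x y * f y) = f x" and x: "x \<in> S"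
  shows "f x = f z"
proof -
  define g where "g x = f x - f z" for x
  have Pg: "(\<Sum>y\<in>S. P x y * g y) = g x" if "x \<in> S" for x
    using f[OF that] stochD2[OF st that] by (simp add: g_def algebra_simps sum_subtractf sum_distrib_left[symmetric])
  have "(\<Sum>x\<in>S. mu x * g x * (\<Sum>y\<in>S. P x y * g y)) \<le> \<rho> * (\<Sum>x\<in>S. mu x * (g x)^2)"
    using mu by (intro quad_bound[OF fin st _ rv z h ly]) (auto simp: g_def intro: less_imp_le)
  hence "(\<Sum>x\<in>S. mu x * (g x)^2) \<le> \<rho> * (\<Sum>x\<in>S. mu x * (g x)^2)"
    using Pg by (simp add: power2_eq_square mult.assoc)
  moreover have nn: "0 \<le> (\<Sum>x\<in>S. mu x * (g x)^2)" using mu by (intro sum_nonneg mult_nonneg_nonneg) (auto intro: less_imp_le)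
  ultimately have "(\<Sum>x\<in>S. mu x * (g x)^2) = 0" using rho
    by (smt (verit) mult_le_cancel_right1)
  hence "\<forall>x\<in>S. mu x * (g x)^2 = 0" using fin mu by (subst (asm) sum_nonneg_eq_0_iff) (auto intro!: mult_nonneg_nonneg intro: less_imp_le)
  hence "mu x * (g x)^2 = 0" using x by blast
  thus ?thesis using mu[OF x] by (simp add: g_def)
qed

lemma eig_finite: assumes fin: "finite S" shows "finite {l. is_eigenvalue S P l}"
proof -
  define xs where "xs = sorted_list_of_set S"
  define n where "n = length xs"
  have dxs: "distinct xs" "set xs = S" using fin by (auto simp: xs_def)
  have bij: "bij_betw ((!) xs) {..<n} S" using dxs by (intro bij_betw_nth) (auto simp: n_def)
  define A where "A = Matrix.mat n n (\<lambda>(i,j). P (xs ! i) (xs ! j))"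
  have Ac: "A \<in> carrier_mat n n" by (simp add: A_def)
  have "{l. is_eigenvalue S P l} \<subseteq> spectrum A"
  proof
    fix l assume "l \<in> {l. is_eigenvalue S P l}"
    then obtain f where f0: "\<exists>x\<in>S. f x \<noteq> 0" and fe: "\<forall>x\<in>S. (\<Sum>y\<in>S. P x y * f y) = l * f x"
      by (auto simp: is_eigenvalue_def)
    define v where "v = Matrix.vec n (\<lambda>i. f (xs ! i))"
    have "eigenvector A v l" unfolding eigenvector_def
    proof (intro conjI)
      show "v \<in> carrier_vec (dim_row A)" by (simp add: v_def A_def)
      show "v \<noteq> 0\<^sub>v (dim_row A)"
      proof
        assume v0: "v = 0\<^sub>v (dim_row A)"
        from f0 obtain x where x: "x \<in> S" "f x \<noteq> 0" by blast
        then obtain i where i: "i < n" "xs ! i = x" using bij by (auto simp: bij_betw_def)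
        have "v $ i = f x" using i by (simp add: v_def)
        moreover have "v $ i = 0" using v0 i by (simp add: A_def)
        ultimately show False using x by simp
      qed
      show "A *\<^sub>v v = l \<cdot>\<^sub>v v"
      proof (rule eq_vecI)
        show "dim_vec (A *\<^sub>v v) = dim_vec (l \<cdot>\<^sub>v v)" by (simp add: A_def v_def)
        fix i assume "i < dim_vec (l \<cdot>\<^sub>v v)"
        hence i: "i < n" by (simp add: v_def)
        have xi: "xs ! i \<in> S" using bij i by (auto simp: bij_betw_def)
        have "(A *\<^sub>v v) $ i = (\<Sum>j\<in>{0..<n}. P (xs ! i) (xs ! j) * f (xs ! j))"
          using i by (simp add: A_def v_def scalar_prod_def)
        also have "\<dots> = (\<Sum>y\<in>S. P (xs ! i) y * f y)"
          using sum.reindex_bij_betw[OF bij, of "\<lambda>y. P (xs ! i) y * f y"] by (simp add: atLeast0LessThan)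
        also have "\<dots> = l * f (xs ! i)" using fe xi by blast
        finally show "(A *\<^sub>v v) $ i = (l \<cdot>\<^sub>v v) $ i" using i by (simp add: v_def)
      qed
    qed
    thus "l \<in> spectrum A" by (auto simp: spectrum_def eigenvalue_def)
  qed
  thus ?thesis using card_finite_spectrum(1)[OF Ac] finite_subset by blast
qed

lemma lambda2_bound:
  assumes fin: "finite S" and st: "stochastic S P" and mu: "\<And>x. x \<in> S \<Longrightarrow> 0 < mu x"
    and rv: "reversible_chain S P mu" and z: "z \<in> S"
    and h: "\<And>x. x \<in> S - {z} \<Longrightarrow> 0 < h x"
    and ly: "\<And>x. x \<in> S - {z} \<Longrightarrow> (\<Sum>y\<in>S - {z}. P x y * h y) \<le> \<rho> * h x"
    and rho: "\<rho> < 1"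
    and ex: "is_eigenvalue S P l0" "l0 < 1"
  shows "lambda2 S P \<le> \<rho>"
proof -
  have nh: "\<not> (\<exists>f. (\<exists>x\<in>S. \<exists>y\<in>S. f x \<noteq> f y) \<and> (\<forall>x\<in>S. (\<Sum>y\<in>S. P x y * f y) = f x))"
  proof
    assume "\<exists>f. (\<exists>x\<in>S. \<exists>y\<in>S. f x \<noteq> f y) \<and> (\<forall>x\<in>S. (\<Sum>y\<in>S. P x y * f y) = f x)"
    then obtain f x y where "x \<in> S" "y \<in> S" "f x \<noteq> f y" "\<forall>x\<in>S. (\<Sum>y\<in>S. P x y * f y) = f x" by blast
    with harm_const[OF fin st mu rv z h ly rho, of f] show False by metis
  qed
  define X where "X = {l. is_eigenvalue S P l \<and> l < 1}"
  have "finite X" using eig_finite[OF fin, of P] by (auto simp: X_def intro: finite_subset)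
  moreover have "X \<noteq> {}" using ex by (auto simp: X_def)
  moreover have "\<forall>l\<in>X. l \<le> \<rho>"
  proof
    fix l assume "l \<in> X"
    then obtain f where "\<exists>x\<in>S. f x \<noteq> 0" "\<forall>x\<in>S. (\<Sum>y\<in>S. P x y * f y) = l * f x" "l < 1"
      by (auto simp: X_def is_eigenvalue_def)
    thus "l \<le> \<rho>" using eig_le[OF fin st mu rv z h ly, of f l] rho by auto
  qed
  ultimately have "Max X \<le> \<rho>" by simp
  moreover have "lambda2 S P = Max X" unfolding lambda2_def X_def by (rule if_not_P[OF nh])
  ultimately show ?thesis by simp
qed



section \<open>The specific chain\<close>

definition NN :: "nat \<Rightarrow> nat" where "NN n = n + 16"
definition rr :: "nat \<Rightarrow> real" where "rr n = 1 / real (NN n) ^ 3"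
definition len :: "nat \<Rightarrow> nat \<Rightarrow> nat" where
  "len n i = (if i = 0 then 10 * NN n else if i = 1 then 20 * NN n else 1)"
definition pex :: "nat \<Rightarrow> nat \<Rightarrow> real" where
  "pex n i = (if i = 1 then 1 / (8 * real (NN n)) else 0)"
definition aa :: "nat \<Rightarrow> nat \<Rightarrow> real" where "aa n i = 1 - pex n i - rr n"
definition sg :: "nat \<Rightarrow> nat \<Rightarrow> real" where "sg n i = rr n / aa n i"

abbreviation enc :: "nat \<Rightarrow> nat \<Rightarrow> nat" where "enc i j \<equiv> prod_encode (i, j)"
definition br :: "nat \<Rightarrow> nat" where "br x = fst (prod_decode x)"
definition ps :: "nat \<Rightarrow> nat" where "ps x = snd (prod_decode x)"

definition TT :: "nat \<Rightarrow> (nat \<times> nat) set" where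
  "TT n = {(i, j). i < 4 \<and> 1 \<le> j \<and> j \<le> len n i}"
definition SS :: "nat \<Rightarrow> nat set" where "SS n = insert 0 (prod_encode ` TT n)"

definition fwd :: "nat \<Rightarrow> nat" where
  "fwd x = (if ps x = 1 then 0 else enc (br x) (ps x - 1))"
definition bwd :: "nat \<Rightarrow> nat \<Rightarrow> nat" where
  "bwd n x = (if ps x = len n (br x) then x else enc (br x) (ps x + 1))"
definition QQ :: "nat \<Rightarrow> nat \<Rightarrow> nat \<Rightarrow> real" where
  "QQ n x y = aa n (br x) * (if y = fwd x then 1 else 0) + pex n (br x) * (if y = 0 then 1 else 0)
     + rr n * (if y = bwd n x then 1 else 0)"
definition mm :: "nat \<Rightarrow> nat \<Rightarrow> real" where
  "mm n x = (if x = 0 then 1 else sg n (br x) ^ ps x)"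
definition DD :: "nat \<Rightarrow> real" where "DD n = (\<Sum>w\<in>SS n - {0}. mm n w)"
definition PP :: "nat \<Rightarrow> nat \<Rightarrow> nat \<Rightarrow> real" where
  "PP n x y = (if x = 0 then (if y = 0 then 1 - (\<Sum>w\<in>SS n - {0}. mm n w * QQ n w 0) else mm n y * QQ n y 0)
     else QQ n x y)"
definition MU :: "nat \<Rightarrow> nat \<Rightarrow> real" where "MU n x = mm n x / (1 + DD n)"

lemma enc0: "enc 0 0 = 0" by (simp add: prod_encode_def)
lemma enc_eq0: "enc i j = 0 \<longleftrightarrow> i = 0 \<and> j = 0"
  using prod_encode_eq[of "(i,j)" "(0,0)"] by (simp add: enc0)
lemma br_enc[simp]: "br (enc i j) = i" by (simp add: br_def)
lemma ps_enc[simp]: "ps (enc i j) = j" by (simp add: ps_def)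
lemma enc_br_ps: "enc (br x) (ps x) = x" by (simp add: br_def ps_def)

lemma NN_ge: "16 \<le> NN n" by (simp add: NN_def)
lemma rr_pos: "0 < rr n" using NN_ge[of n] by (simp add: rr_def)
lemma rr_le: "rr n \<le> 1 / 4096"
proof -
  have "(16::real)^3 \<le> real (NN n) ^ 3" using NN_ge[of n] by (intro power_mono) auto
  thus ?thesis by (simp add: rr_def divide_simps)
qed
lemma pex_nonneg: "0 \<le> pex n i" by (simp add: pex_def)
lemma pex_le: "pex n i \<le> 1 / 128"
  using NN_ge[of n] by (auto simp: pex_def divide_simps)
lemma aa_ge: "1 / 2 \<le> aa n i" using pex_le[of n i] rr_le[of n] by (simp add: aa_def)
lemma aa_le: "aa n i \<le> 1" using pex_nonneg[of n i] rr_pos[of n] by (simp add: aa_def)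
lemma sg_pos: "0 < sg n i" using aa_ge[of n i] rr_pos[of n] by (simp add: sg_def)
lemma sg_le: "sg n i \<le> 2 * rr n"
  using aa_ge[of n i] rr_pos[of n] by (simp add: sg_def divide_simps)
lemma sg_aa: "sg n i * aa n i = rr n" using aa_ge[of n i] by (simp add: sg_def)
lemma len_ge: "1 \<le> len n i" using NN_ge[of n] by (simp add: len_def)

lemma finite_TT: "finite (TT n)"
proof -
  have "TT n \<subseteq> {..<4} \<times> {..len n 0 + len n 1}" using NN_ge[of n] by (auto simp: TT_def len_def split: if_splits)
  thus ?thesis by (rule finite_subset) auto
qed
lemma finite_SS: "finite (SS n)" using finite_TT by (simp add: SS_def)
lemma zero_SS: "0 \<in> SS n" by (simp add: SS_def)
lemma enc_SS: "(i,j) \<in> TT n \<Longrightarrow> enc i j \<in> SS n" by (simp add: SS_def)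
lemma enc_SS_iff: "enc i j \<in> SS n \<longleftrightarrow> (i = 0 \<and> j = 0) \<or> (i < 4 \<and> 1 \<le> j \<and> j \<le> len n i)"
  by (auto simp: SS_def TT_def enc_eq0)
lemma SS_cases: assumes "x \<in> SS n" "x \<noteq> 0"
  obtains i j where "x = enc i j" "i < 4" "1 \<le> j" "j \<le> len n i"
  using assms by (auto simp: SS_def TT_def)
lemma SS_nz: assumes "x \<in> SS n" "x \<noteq> 0" shows "br x < 4" "1 \<le> ps x" "ps x \<le> len n (br x)"
  using assms by (auto elim!: SS_cases)

lemma fwd_SS: "x \<in> SS n \<Longrightarrow> x \<noteq> 0 \<Longrightarrow> fwd x \<in> SS n"
  by (auto elim!: SS_cases simp: fwd_def zero_SS enc_SS_iff)
lemma bwd_SS: "x \<in> SS n \<Longrightarrow> x \<noteq> 0 \<Longrightarrow> bwd n x \<in> SS n"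
  by (auto elim!: SS_cases simp: bwd_def enc_SS_iff)
lemma bwd_nz: assumes "x \<in> SS n" "x \<noteq> 0" shows "bwd n x \<noteq> 0"
proof -
  obtain i j where ij: "x = enc i j" "1 \<le> j" using assms by (auto elim!: SS_cases)
  have "enc i (Suc j) \<noteq> 0" using enc_eq0[of i "Suc j"] by simp
  thus ?thesis using assms(2) unfolding bwd_def ij by (auto simp del: prod_encode_eq)
qed

lemma sum_delta_SS: "a \<in> SS n \<Longrightarrow> (\<Sum>y\<in>SS n. (if y = a then 1 else 0) * F y) = (F a :: real)"
  using finite_SS[of n] by (simp add: if_distrib[of "\<lambda>u. u * F _"] sum.delta' cong: if_cong)

lemma sumQ: assumes "x \<in> SS n" "x \<noteq> 0"
  shows "(\<Sum>y\<in>SS n. PP n x y * F y) =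
    aa n (br x) * F (fwd x) + pex n (br x) * F 0 + rr n * F (bwd n x)"
proof -
  have "(\<Sum>y\<in>SS n. PP n x y * F y) = (\<Sum>y\<in>SS n. aa n (br x) * ((if y = fwd x then 1 else 0) * F y)
      + pex n (br x) * ((if y = 0 then 1 else 0) * F y) + rr n * ((if y = bwd n x then 1 else 0) * F y))"
    using assms(2) by (intro sum.cong) (auto simp: PP_def QQ_def algebra_simps)
  also have "\<dots> = aa n (br x) * F (fwd x) + pex n (br x) * F 0 + rr n * F (bwd n x)"
    using fwd_SS[OF assms] bwd_SS[OF assms] zero_SS[of n]
    by (simp add: sum.distrib sum_distrib_left[symmetric] sum_delta_SS)
  finally show ?thesis .
qed

lemma rowsum_nz: assumes "x \<in> SS n" "x \<noteq> 0" shows "(\<Sum>y\<in>SS n. PP n x y) = 1"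
  using sumQ[OF assms, of "\<lambda>_. 1"] by (simp add: aa_def)

lemma DD_bound: "DD n \<le> 16 * rr n" "0 \<le> DD n"
proof -
  have geo: "(\<Sum>j=1..m. s ^ j) \<le> 2 * s" if s: "0 \<le> s" "s \<le> 1/2" for s :: real and m
  proof (cases "m < 1")
    case True thus ?thesis using s by simp
  next
    case False
    have "(\<Sum>j=1..m. s ^ j) = (s - s ^ Suc m) / (1 - s)" using False s by (simp add: sum_gp)
    also have "\<dots> \<le> s / (1 - s)" using s by (intro divide_right_mono) auto
    also have "\<dots> \<le> 2 * s"
    proof -
      have "0 \<le> s * (1 - 2 * s)" using s by simp
      hence "s \<le> 2 * s * (1 - s)" by (simp add: algebra_simps)
      thus ?thesis using s by (simp add: divide_simps)
    qed
    finally show ?thesis .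
  qed
  have "SS n - {0} = prod_encode ` TT n" by (auto simp: SS_def TT_def enc_eq0)
  hence "DD n = (\<Sum>p\<in>TT n. mm n (prod_encode p))"
    by (simp add: DD_def sum.reindex inj_on_def)
  also have "\<dots> = (\<Sum>p\<in>TT n. sg n (fst p) ^ snd p)"
    by (intro sum.cong) (auto simp: mm_def TT_def enc_eq0 br_def ps_def)
  also have "TT n = Sigma {..<4} (\<lambda>i. {1..len n i})" by (auto simp: TT_def)
  also have "(\<Sum>p\<in>Sigma {..<4} (\<lambda>i. {1..len n i}). sg n (fst p) ^ snd p) = (\<Sum>i<4. \<Sum>j=1..len n i. sg n i ^ j)"
    by (subst sum.Sigma) (auto simp: case_prod_unfold)
  also have "\<dots> \<le> (\<Sum>i<(4::nat). 2 * (2 * rr n))"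
  proof (rule sum_mono)
    fix i
    have "0 \<le> sg n i" "sg n i \<le> 1/2" using sg_pos[of n i] sg_le[of n i] rr_le[of n] by auto
    hence "(\<Sum>j=1..len n i. sg n i ^ j) \<le> 2 * sg n i" by (rule geo)
    thus "(\<Sum>j=1..len n i. sg n i ^ j) \<le> 2 * (2 * rr n)" using sg_le[of n i] by linarith
  qed
  finally show "DD n \<le> 16 * rr n" by simp
  show "0 \<le> DD n" unfolding DD_def using sg_pos by (intro sum_nonneg) (auto simp: mm_def less_imp_le)
qed

lemma mm_pos: "0 < mm n x" using sg_pos by (simp add: mm_def)

lemma QQ_nonneg: "0 \<le> QQ n x y"
proof -
  have "0 \<le> aa n (br x)" using aa_ge[of n "br x"] by linarith
  thus ?thesis using pex_nonneg[of n "br x"] rr_pos[of n] unfolding QQ_def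
    by (intro add_nonneg_nonneg mult_nonneg_nonneg) auto
qed
lemma QQ_le1: "QQ n x y \<le> 1"
proof -
  have "0 \<le> aa n (br x)" using aa_ge[of n "br x"] by linarith
  hence "QQ n x y \<le> aa n (br x) + pex n (br x) + rr n" using pex_nonneg[of n "br x"] rr_pos[of n]
    unfolding QQ_def by (intro add_mono) auto
  thus ?thesis by (simp add: aa_def)
qed

lemma escape_le: "(\<Sum>w\<in>SS n - {0}. mm n w * QQ n w 0) \<le> DD n"
  unfolding DD_def using mm_pos QQ_le1 by (intro sum_mono) (simp add: mult_left_le less_imp_le)
lemma escape_nonneg: "0 \<le> (\<Sum>w\<in>SS n - {0}. mm n w * QQ n w 0)"
  using mm_pos QQ_nonneg by (intro sum_nonneg) (simp add: less_imp_le)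

lemma PP00: "1 - 16 * rr n \<le> PP n 0 0" "PP n 0 0 \<le> 1"
  using escape_le[of n] DD_bound[of n] escape_nonneg[of n] by (auto simp: PP_def)

lemma stoch: "stochastic (SS n) (PP n)"
  unfolding stochastic_def
proof (intro conjI ballI)
  fix x y assume x: "x \<in> SS n" and y: "y \<in> SS n"
  show "0 \<le> PP n x y"
  proof (cases "x = 0")
    case True thus ?thesis using PP00[of n] rr_le[of n] mm_pos[of n y] QQ_nonneg[of n y 0]
      by (auto simp: PP_def)
  next
    case False thus ?thesis using QQ_nonneg by (simp add: PP_def)
  qed
next
  fix x assume x: "x \<in> SS n"
  show "(\<Sum>y\<in>SS n. PP n x y) = 1"
  proof (cases "x = 0")
    case True
    have "(\<Sum>y\<in>SS n. PP n x y) = PP n 0 0 + (\<Sum>y\<in>SS n - {0}. PP n 0 y)"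
      using True finite_SS[of n] zero_SS[of n] by (simp add: sum.remove)
    also have "(\<Sum>y\<in>SS n - {0}. PP n 0 y) = (\<Sum>w\<in>SS n - {0}. mm n w * QQ n w 0)"
      by (intro sum.cong) (auto simp: PP_def)
    finally show ?thesis by (simp add: PP_def)
  next
    case False thus ?thesis using rowsum_nz[OF x] by simp
  qed
qed

lemma QQ_enc: assumes "(i,j) \<in> TT n" "(i',j') \<in> TT n"
  shows "QQ n (enc i j) (enc i' j') =
     (if i' = i \<and> j' + 1 = j then aa n i else 0) + (if i' = i \<and> j' = j + 1 then rr n else 0)
     + (if i' = i \<and> j' = j \<and> j = len n i then rr n else 0)"
  using assms by (auto simp: QQ_def fwd_def bwd_def TT_def enc_eq0)

lemma rev_nz: assumes "(i,j) \<in> TT n" "(i',j') \<in> TT n"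
  shows "mm n (enc i j) * QQ n (enc i j) (enc i' j') = mm n (enc i' j') * QQ n (enc i' j') (enc i j)"
proof -
  have nz: "enc i j \<noteq> 0" "enc i' j' \<noteq> 0" using assms by (auto simp: TT_def enc_eq0)
  have m: "mm n (enc i j) = sg n i ^ j" "mm n (enc i' j') = sg n i' ^ j'" using nz by (auto simp: mm_def)
  show ?thesis
  proof (cases "i' = i \<and> j' + 1 = j")
    case True
    hence "sg n i ^ j * aa n i = sg n i ^ j' * rr n" using sg_aa[of n i] by (auto simp: mult.assoc)
    thus ?thesis using True assms unfolding m QQ_enc[OF assms] QQ_enc[OF assms(2,1)] by auto
  next
    case F1: False
    show ?thesis
    proof (cases "i' = i \<and> j' = j + 1")
      case True
      hence "sg n i ^ j * rr n = sg n i ^ j' * aa n i" using sg_aa[of n i] by (auto simp: mult.assoc mult.commute)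
      thus ?thesis using True assms unfolding m QQ_enc[OF assms] QQ_enc[OF assms(2,1)] by auto
    next
      case False
      thus ?thesis using F1 unfolding m QQ_enc[OF assms] QQ_enc[OF assms(2,1)] by auto
    qed
  qed
qed

lemma MU_pos: "0 < MU n x" using mm_pos DD_bound[of n] by (simp add: MU_def)

lemma MU_sum: "(\<Sum>x\<in>SS n. MU n x) = 1"
proof -
  have "(\<Sum>x\<in>SS n. mm n x) = 1 + DD n"
    using finite_SS[of n] zero_SS[of n] by (simp add: sum.remove DD_def mm_def)
  thus ?thesis using DD_bound[of n] by (simp add: MU_def sum_divide_distrib[symmetric])
qed

lemma MU0: "1 - MU n 0 \<le> 16 * rr n"
proof -
  have "1 - MU n 0 = DD n / (1 + DD n)" using DD_bound[of n] by (simp add: MU_def mm_def field_simps)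
  also have "\<dots> \<le> DD n / 1" using DD_bound[of n] by (intro divide_left_mono) auto
  finally show ?thesis using DD_bound[of n] by simp
qed

lemma reversible: "reversible_chain (SS n) (PP n) (MU n)"
  unfolding reversible_chain_def
proof (intro ballI)
  fix x y assume x: "x \<in> SS n" and y: "y \<in> SS n"
  have "mm n x * PP n x y = mm n y * PP n y x"
  proof (cases "x = 0")
    case True thus ?thesis by (cases "y = 0") (auto simp: PP_def mm_def)
  next
    case xnz: False
    show ?thesis
    proof (cases "y = 0")
      case True thus ?thesis using xnz by (auto simp: PP_def mm_def)
    next
      case False
      obtain i j where xi: "x = enc i j" "(i,j) \<in> TT n" using x xnz by (auto elim!: SS_cases simp: TT_def)
      obtain i' j' where yi: "y = enc i' j'" "(i',j') \<in> TT n" using y False by (auto elim!: SS_cases simp: TT_def)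
      show ?thesis using rev_nz[OF xi(2) yi(2)] xnz False xi yi by (simp add: PP_def)
    qed
  qed
  thus "MU n x * PP n x y = MU n y * PP n y x" by (simp add: MU_def)
qed



lemma PP_nz: "x \<noteq> 0 \<Longrightarrow> PP n x y = QQ n x y" by (simp add: PP_def)

lemma PP_fwd: assumes "x \<in> SS n" "x \<noteq> 0" shows "aa n (br x) \<le> PP n x (fwd x)"
proof -
  have "0 \<le> pex n (br x) * (if fwd x = 0 then 1 else 0)" using pex_nonneg by simp
  moreover have "0 \<le> rr n * (if fwd x = bwd n x then 1 else 0)" using rr_pos[of n] by simp
  ultimately show ?thesis using assms by (simp add: PP_def QQ_def)
qed

lemma PP_bwd: assumes "x \<in> SS n" "x \<noteq> 0" shows "rr n \<le> PP n x (bwd n x)"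
proof -
  have "0 \<le> pex n (br x) * (if bwd n x = 0 then 1 else 0)" using pex_nonneg by simp
  moreover have "0 \<le> aa n (br x) * (if bwd n x = fwd x then 1 else 0)" using aa_ge[of n "br x"] by simp
  ultimately show ?thesis using assms by (simp add: PP_def QQ_def)
qed

definition reach :: "nat \<Rightarrow> nat \<Rightarrow> nat \<Rightarrow> bool" where
  "reach n x y \<longleftrightarrow> (\<exists>k. 0 < mpow (PP n) (SS n) k x y)"

lemma reach_refl: "reach n x x" unfolding reach_def by (rule exI[of _ 0]) simp

lemma reach_step: assumes x: "x \<in> SS n" and w: "w \<in> SS n" and p: "0 < PP n x w" and r: "reach n w y"
  shows "reach n x y"
proof -
  obtain k where k: "0 < mpow (PP n) (SS n) k w y" using r by (auto simp: reach_def)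
  have "PP n x w * mpow (PP n) (SS n) k w y \<le> (\<Sum>z\<in>SS n. PP n x z * mpow (PP n) (SS n) k z y)"
    using finite_SS[of n] w stochD[OF stoch x] mpow_nonneg[OF stoch]
    by (intro member_le_sum[where f = "\<lambda>z. PP n x z * mpow (PP n) (SS n) k z y"]) auto
  moreover have "0 < PP n x w * mpow (PP n) (SS n) k w y" using p k by simp
  ultimately have "0 < mpow (PP n) (SS n) (Suc k) x y" by simp
  thus ?thesis unfolding reach_def by (rule exI)
qed

lemma reach_0_to: assumes y: "y \<in> SS n" shows "reach n 0 y"
proof (cases "y = 0")
  case True thus ?thesis by (simp add: reach_refl)
next
  case False
  then obtain i j where y': "y = enc i j" "i < 4" "1 \<le> j" "j \<le> len n i" using y by (auto elim!: SS_cases)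
  have chain: "d < j \<Longrightarrow> reach n (enc i (j - d)) (enc i j)" for d
  proof (induction d)
    case 0 thus ?case by (simp add: reach_refl)
  next
    case (Suc d)
    let ?x = "enc i (j - Suc d)"
    have "1 \<le> j - Suc d" "j - Suc d \<le> len n i" using Suc.prems y' by arith+
    hence xS: "?x \<in> SS n" using y' by (simp add: enc_SS_iff)
    have xnz: "?x \<noteq> 0" using Suc.prems enc_eq0 by simp
    have "bwd n ?x = enc i (j - d)" using Suc.prems y' by (simp add: bwd_def Suc_diff_Suc)
    moreover have "1 \<le> j - d" "j - d \<le> len n i" using Suc.prems y' by arith+
    hence "enc i (j - d) \<in> SS n" using y' by (simp add: enc_SS_iff)
    ultimately show ?case using reach_step[OF xS _ _ Suc.IH] PP_bwd[OF xS xnz] rr_pos[of n] Suc.prems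
      by fastforce
  qed
  have r1: "reach n (enc i 1) y" using chain[of "j - 1"] y' by simp
  have e1S: "enc i 1 \<in> SS n" using y' len_ge[of n i] by (simp add: enc_SS_iff)
  have "0 < PP n 0 (enc i 1)"
  proof -
    have "aa n i \<le> QQ n (enc i 1) 0" using PP_fwd[OF e1S] enc_eq0 by (simp add: PP_def fwd_def)
    hence "0 < QQ n (enc i 1) 0" using aa_ge[of n i] by linarith
    moreover have "enc i 1 \<noteq> 0" using enc_eq0 by simp
    ultimately show ?thesis using mm_pos[of n "enc i 1"] by (simp add: PP_def)
  qed
  thus ?thesis using reach_step[OF zero_SS e1S _ r1] by simp
qed

lemma reach_all: assumes y: "y \<in> SS n" shows "x \<in> SS n \<Longrightarrow> reach n x y"
proof (induction "ps x" arbitrary: x rule: less_induct)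
  case less
  show ?case
  proof (cases "x = 0")
    case True thus ?thesis using reach_0_to[OF y] by simp
  next
    case False
    have fS: "fwd x \<in> SS n" by (rule fwd_SS[OF less.prems False])
    have "0 < PP n x (fwd x)" using PP_fwd[OF less.prems False] aa_ge[of n "br x"] by linarith
    moreover have "reach n (fwd x) y"
    proof (cases "fwd x = 0")
      case True thus ?thesis using reach_0_to[OF y] by simp
    next
      case F: False
      hence "ps (fwd x) < ps x" using SS_nz[OF less.prems False] by (auto simp: fwd_def split: if_splits)
      thus ?thesis using less.hyps fS by blast
    qed
    ultimately show ?thesis using reach_step[OF less.prems fS] by blast
  qed
qed

lemma chain_ok: "fin_irr_rev_chain (SS n) (PP n) (MU n)"
  unfolding fin_irr_rev_chain_def
  using finite_SS[of n] zero_SS[of n] stoch[of n] MU_pos[of n] MU_sum[of n] reversible[of n] reach_all[of _ n]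
  by (auto simp: irreducible_chain_def reach_def)

section \<open>Lyapunov functions\<close>

lemma sum_minus0: "(\<Sum>y\<in>SS n - {0}. G y) = (\<Sum>y\<in>SS n. (if y = 0 then 0 else G y) :: real)"
proof -
  have "(\<Sum>y\<in>SS n. (if y = 0 then 0 else G y)) = (\<Sum>y\<in>SS n - {0}. (if y = 0 then 0 else G y))"
    using finite_SS[of n] zero_SS[of n] by (simp add: sum.remove)
  also have "\<dots> = (\<Sum>y\<in>SS n - {0}. G y)" by (intro sum.cong) auto
  finally show ?thesis by simp
qed

definition rho :: "nat \<Rightarrow> real" where "rho n = 1/2 + 2 * rr n"

lemma lyap_geo: assumes x: "x \<in> SS n - {0}"
  shows "(\<Sum>y\<in>SS n - {0}. PP n x y * 2 ^ ps y) \<le> rho n * 2 ^ ps x"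
proof -
  have xS: "x \<in> SS n" and xnz: "x \<noteq> 0" using x by auto
  define F where "F y = (if y = 0 then 0 else (2::real) ^ ps y)" for y
  have "(\<Sum>y\<in>SS n - {0}. PP n x y * 2 ^ ps y) = (\<Sum>y\<in>SS n. PP n x y * F y)"
    unfolding sum_minus0 by (intro sum.cong) (auto simp: F_def)
  also have "\<dots> = aa n (br x) * F (fwd x) + pex n (br x) * F 0 + rr n * F (bwd n x)" by (rule sumQ[OF xS xnz])
  also have "\<dots> \<le> 1 * 2 ^ (ps x - 1) + rr n * 2 ^ (ps x + 1)"
  proof -
    have j: "1 \<le> ps x" using SS_nz[OF xS xnz] by simp
    have "F (fwd x) \<le> 2 ^ (ps x - 1)" by (auto simp: F_def fwd_def)
    moreover have "F (bwd n x) \<le> 2 ^ (ps x + 1)" by (auto simp: F_def bwd_def)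
    moreover have "0 \<le> F (fwd x)" by (simp add: F_def)
    ultimately have "aa n (br x) * F (fwd x) \<le> 1 * 2 ^ (ps x - 1)"
      using aa_le[of n "br x"] aa_ge[of n "br x"] by (intro mult_mono) auto
    moreover have "rr n * F (bwd n x) \<le> rr n * 2 ^ (ps x + 1)"
      using \<open>F (bwd n x) \<le> 2 ^ (ps x + 1)\<close> rr_pos[of n] by (intro mult_left_mono) auto
    ultimately show ?thesis by (simp add: F_def)
  qed
  also have "\<dots> = rho n * 2 ^ ps x"
  proof -
    have j: "1 \<le> ps x" using SS_nz[OF xS xnz] by simp
    then obtain m where m: "ps x = Suc m" by (cases "ps x") auto
    show ?thesis by (simp add: m rho_def algebra_simps)
  qed
  finally show ?thesis .
qed

lemma avoid_geo: assumes x: "x \<in> SS n"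
  shows "avoid (PP n) (SS n) {0} k x \<le> rho n ^ k * 2 ^ ps x"
proof (cases "x = 0")
  case True thus ?thesis using avoid_in[of 0 "{0}"] rr_pos[of n] by (simp add: rho_def)
next
  case False
  show ?thesis
  proof (rule avoid_lyap[OF stoch, where C = "SS n - {0}" and A = "{0}"])
    show "SS n - {0} \<subseteq> SS n" by auto
    show "x \<in> SS n - {0}" using x False by auto
    show "finite (SS n)" by (rule finite_SS)
    show "0 \<le> rho n" using rr_pos[of n] by (simp add: rho_def)
  qed (auto intro: lyap_geo)
qed

lemma avoid_br1: assumes x: "x \<in> SS n" "x \<noteq> 0" "br x = 1"
  shows "avoid (PP n) (SS n) {0} k x \<le> (1 - pex n 1) ^ k"
proof -
  define C where "C = {x \<in> SS n. x \<noteq> 0 \<and> br x = 1}"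
  have "avoid (PP n) (SS n) {0} k x \<le> (1 - pex n 1) ^ k * 1"
  proof (rule avoid_lyap[OF stoch, where C = C and A = "{0}" and h = "\<lambda>_. 1"])
    show "C \<subseteq> SS n" by (auto simp: C_def)
    show "x \<in> C" using x by (auto simp: C_def)
    show "finite (SS n)" by (rule finite_SS)
    show "0 \<le> 1 - pex n 1" using pex_le[of n 1] by simp
    show "\<And>x. x \<in> C \<Longrightarrow> x \<notin> {0}" by (auto simp: C_def)
    show "\<And>x. x \<in> C \<Longrightarrow> 1 \<le> (1::real)" by simp
    fix u y assume u: "u \<in> C" and y: "y \<in> SS n" and p: "PP n u y \<noteq> 0"
    have uS: "u \<in> SS n" "u \<noteq> 0" "br u = 1" using u by (auto simp: C_def)
    have "y = fwd u \<or> y = 0 \<or> y = bwd n u" using p uS(2) by (auto simp: PP_def QQ_def split: if_splits)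
    thus "y \<in> {0} \<or> y \<in> C" using uS y bwd_nz[OF uS(1,2)]
      by (auto simp: C_def fwd_def bwd_def)
  next
    fix u assume u: "u \<in> C"
    have uS: "u \<in> SS n" "u \<noteq> 0" "br u = 1" using u by (auto simp: C_def)
    have Ceq: "C = SS n \<inter> {x. x \<noteq> 0 \<and> br x = 1}" by (auto simp: C_def)
    have "(\<Sum>y\<in>C. PP n u y * 1) = (\<Sum>y\<in>SS n. (if y \<in> {x. x \<noteq> 0 \<and> br x = 1} then PP n u y * 1 else 0))"
      unfolding Ceq by (rule sum.inter_restrict[OF finite_SS])
    also have "\<dots> = (\<Sum>y\<in>SS n. PP n u y * (if y \<in> C then 1 else 0))"
      by (intro sum.cong) (auto simp: C_def)
    finally have "(\<Sum>y\<in>C. PP n u y * 1) = (\<Sum>y\<in>SS n. PP n u y * (if y \<in> C then 1 else 0))" .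
    also have "\<dots> = aa n 1 * (if fwd u \<in> C then 1 else 0) + pex n 1 * (if 0 \<in> C then 1 else 0)
       + rr n * (if bwd n u \<in> C then 1 else 0)" using sumQ[OF uS(1,2)] uS(3) by simp
    also have "\<dots> \<le> aa n 1 + rr n" using aa_ge[of n 1] rr_pos[of n] by (auto simp: C_def)
    also have "\<dots> = (1 - pex n 1) * 1" by (simp add: aa_def)
    finally show "(\<Sum>y\<in>C. PP n u y * 1) \<le> (1 - pex n 1) * 1" .
  qed
  thus ?thesis by simp
qed

definition VV :: "nat \<Rightarrow> nat \<Rightarrow> real" where
  "VV n x = (if br x = 1 then 8 * real (NN n) else real (ps x) / (1 - 2 * rr n))"

lemma super_V: assumes x: "x \<in> SS n - {0}"
  shows "1 + (\<Sum>y\<in>SS n - {0}. PP n x y * VV n y) \<le> VV n x"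
proof -
  have xS: "x \<in> SS n" and xnz: "x \<noteq> 0" using x by auto
  have r: "0 < rr n" "rr n \<le> 1/4096" using rr_pos rr_le by auto
  define F where "F y = (if y = 0 then 0 else VV n y)" for y
  have "(\<Sum>y\<in>SS n - {0}. PP n x y * VV n y) = (\<Sum>y\<in>SS n. PP n x y * F y)"
    unfolding sum_minus0 by (intro sum.cong) (auto simp: F_def)
  also have "\<dots> = aa n (br x) * F (fwd x) + pex n (br x) * F 0 + rr n * F (bwd n x)" by (rule sumQ[OF xS xnz])
  finally have eq: "(\<Sum>y\<in>SS n - {0}. PP n x y * VV n y) = aa n (br x) * F (fwd x) + rr n * F (bwd n x)"
    by (simp add: F_def)
  have N: "16 \<le> real (NN n)" using NN_ge[of n] by simp
  show ?thesis
  proof (cases "br x = 1")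
    case True
    have "F (fwd x) \<le> 8 * real (NN n)" "F (bwd n x) \<le> 8 * real (NN n)" using True
      by (auto simp: F_def VV_def fwd_def bwd_def)
    hence "aa n (br x) * F (fwd x) + rr n * F (bwd n x) \<le> aa n 1 * (8 * real (NN n)) + rr n * (8 * real (NN n))"
      using True aa_ge[of n 1] r by (intro add_mono mult_left_mono) auto
    also have "\<dots> = (1 - 1 / (8 * real (NN n))) * (8 * real (NN n))" by (simp add: aa_def pex_def algebra_simps)
    also have "\<dots> = 8 * real (NN n) - 1" using N by (simp add: algebra_simps)
    finally show ?thesis using eq True by (simp add: VV_def)
  next
    case False
    define j where "j = ps x"
    have j: "1 \<le> j" using SS_nz[OF xS xnz] by (simp add: j_def)
    have d: "0 < 1 - 2 * rr n" using r by simp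
    have pz: "pex n (br x) = 0" using False by (simp add: pex_def)
    have f1: "F (fwd x) \<le> (real j - 1) / (1 - 2 * rr n)"
      using False j d by (auto simp: F_def VV_def fwd_def j_def of_nat_diff)
    have f2: "F (bwd n x) \<le> (real j + 1) / (1 - 2 * rr n)"
      using False j d by (auto simp: F_def VV_def bwd_def j_def divide_right_mono)
    have aaeq: "aa n (br x) = 1 - rr n" using pz by (simp add: aa_def)
    have A1: "aa n (br x) * F (fwd x) \<le> (1 - rr n) * ((real j - 1) / (1 - 2 * rr n))"
      unfolding aaeq by (rule mult_left_mono[OF f1]) (use r in simp)
    have A2: "rr n * F (bwd n x) \<le> rr n * ((real j + 1) / (1 - 2 * rr n))"
      by (rule mult_left_mono[OF f2]) (use r in simp)
    have "aa n (br x) * F (fwd x) + rr n * F (bwd n x) \<le> (1 - rr n) * ((real j - 1) / (1 - 2 * rr n)) + rr n * ((real j + 1) / (1 - 2 * rr n))"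
      using A1 A2 by (rule add_mono)
    also have "\<dots> = ((1 - rr n) * (real j - 1) + rr n * (real j + 1)) / (1 - 2 * rr n)"
      by (simp only: add_divide_distrib[symmetric] times_divide_eq_right)
    also have "(1 - rr n) * (real j - 1) + rr n * (real j + 1) = real j - 1 + 2 * rr n"
      by (simp add: algebra_simps)
    finally have "1 + (aa n (br x) * F (fwd x) + rr n * F (bwd n x)) \<le> 1 + (real j - 1 + 2 * rr n) / (1 - 2 * rr n)"
      by simp
    also have "\<dots> = real j / (1 - 2 * rr n)" using d by (simp add: field_simps)
    finally show ?thesis using eq False by (simp add: VV_def j_def)
  qed
qed

lemma avoid_partial: assumes x: "x \<in> SS n"
  shows "(\<Sum>k<m. avoid (PP n) (SS n) {0} k x) \<le> VV n x" "0 \<le> VV n x"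
proof -
  have r: "0 < rr n" "rr n \<le> 1/4096" using rr_pos rr_le by auto
  have V0: "0 \<le> VV n y" for y using r by (simp add: VV_def)
  show "0 \<le> VV n x" by (rule V0)
  show "(\<Sum>k<m. avoid (PP n) (SS n) {0} k x) \<le> VV n x"
  proof (cases "x = 0")
    case True thus ?thesis using avoid_in[of 0 "{0}"] V0 by simp
  next
    case False
    show ?thesis
    proof (rule avoid_super[OF stoch, where C = "SS n - {0}" and A = "{0}"])
      show "SS n - {0} \<subseteq> SS n" by auto
      show "x \<in> SS n - {0}" using x False by auto
      show "finite (SS n)" by (rule finite_SS)
    qed (auto intro: super_V V0)
  qed
qed

lemma avoid_ones: assumes x: "x \<in> SS n" "x \<noteq> 0" "br x \<noteq> 1"
  shows "k < ps x \<Longrightarrow> avoid (PP n) (SS n) {0} k x = 1"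
  using x
proof (induction k arbitrary: x)
  case 0 thus ?case by simp
next
  case (Suc k)
  have fw: "fwd x \<noteq> 0" "fwd x \<in> SS n" "br (fwd x) = br x" "k < ps (fwd x)"
    using Suc.prems fwd_SS[OF Suc.prems(2,3)] by (auto simp: fwd_def enc_eq0)
  have bw: "bwd n x \<noteq> 0" "bwd n x \<in> SS n" "br (bwd n x) = br x" "k < ps (bwd n x)"
    using Suc.prems bwd_SS[OF Suc.prems(2,3)] bwd_nz[OF Suc.prems(2,3)] by (auto simp: bwd_def)
  have "avoid (PP n) (SS n) {0} (Suc k) x = aa n (br x) * avoid (PP n) (SS n) {0} k (fwd x)
      + pex n (br x) * avoid (PP n) (SS n) {0} k 0 + rr n * avoid (PP n) (SS n) {0} k (bwd n x)"
    using Suc.prems sumQ[OF Suc.prems(2,3)] by simp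
  also have "\<dots> = aa n (br x) + rr n"
  proof -
    have "br (fwd x) \<noteq> 1" "br (bwd n x) \<noteq> 1" using fw(3) bw(3) Suc.prems(4) by auto
    hence "avoid (PP n) (SS n) {0} k (fwd x) = 1" "avoid (PP n) (SS n) {0} k (bwd n x) = 1"
      using Suc.IH[OF fw(4,2,1)] Suc.IH[OF bw(4,2,1)] by auto
    thus ?thesis using Suc.prems by (simp add: pex_def)
  qed
  finally show ?case using Suc.prems by (simp add: aa_def pex_def)
qed

lemma avoid_br1_lower: assumes x: "x \<in> SS n" "x \<noteq> 0" "br x = 1"
  shows "k < ps x \<Longrightarrow> aa n 1 ^ k \<le> avoid (PP n) (SS n) {0} k x"
  using x
proof (induction k arbitrary: x)
  case 0 thus ?case by simp
next
  case (Suc k)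
  have fw: "fwd x \<noteq> 0" "fwd x \<in> SS n" "br (fwd x) = 1" "k < ps (fwd x)"
    using Suc.prems fwd_SS[OF Suc.prems(2,3)] by (auto simp: fwd_def enc_eq0)
  have "avoid (PP n) (SS n) {0} (Suc k) x = aa n 1 * avoid (PP n) (SS n) {0} k (fwd x)
      + pex n 1 * avoid (PP n) (SS n) {0} k 0 + rr n * avoid (PP n) (SS n) {0} k (bwd n x)"
    using Suc.prems sumQ[OF Suc.prems(2,3)] by simp
  also have "\<dots> \<ge> aa n 1 * aa n 1 ^ k"
  proof -
    have "aa n 1 * aa n 1 ^ k \<le> aa n 1 * avoid (PP n) (SS n) {0} k (fwd x)"
      using Suc.IH[OF fw(4,2,1,3)] aa_ge[of n 1] by (intro mult_left_mono) auto
    moreover have "0 \<le> rr n * avoid (PP n) (SS n) {0} k (bwd n x)"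
      using rr_pos[of n] avoid_bounds[OF stoch bwd_SS[OF Suc.prems(2,3)]] by simp
    ultimately show ?thesis by (simp add: avoid_in)
  qed
  finally show ?case by simp
qed

lemma sum_delta_r: assumes "finite A" "a \<in> A"
  shows "(\<Sum>y\<in>A. G y * (if y = a then 1 else 0)) = (G a :: real)"
proof -
  have "(\<Sum>y\<in>A. G y * (if y = a then 1 else 0)) = (\<Sum>y\<in>A. (if y = a then G y else 0))"
    by (intro sum.cong) auto
  also have "\<dots> = G a" using assms by (simp add: sum.delta')
  finally show ?thesis .
qed

lemma twin_eig: "is_eigenvalue (SS n) (PP n) (rr n)"
proof -
  define e2 where "e2 = enc 2 1"
  define e3 where "e3 = enc 3 1"
  have T2: "(2,1) \<in> TT n" "(3,1) \<in> TT n" by (auto simp: TT_def len_def)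
  have e2S: "e2 \<in> SS n" and e3S: "e3 \<in> SS n" using T2 by (auto simp: e2_def e3_def enc_SS)
  have ne: "e2 \<noteq> e3" "e2 \<noteq> 0" "e3 \<noteq> 0" unfolding e2_def e3_def using enc_eq0 by auto
  define f where "f y = (if y = e2 then 1 else 0) - (if y = e3 then 1 else 0 :: real)" for y
  have sumf: "(\<Sum>y\<in>SS n. PP n x y * f y) = PP n x e2 - PP n x e3" for x
  proof -
    have "(\<Sum>y\<in>SS n. PP n x y * f y) = (\<Sum>y\<in>SS n. PP n x y * (if y = e2 then 1 else 0))
        - (\<Sum>y\<in>SS n. PP n x y * (if y = e3 then 1 else 0))"
      unfolding f_def right_diff_distrib by (rule sum_subtractf)
    also have "\<dots> = PP n x e2 - PP n x e3"
      using sum_delta_r[OF finite_SS e2S] sum_delta_r[OF finite_SS e3S] by simp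
    finally show ?thesis .
  qed
  have len23: "len n 2 = 1" "len n 3 = 1" by (auto simp: len_def)
  have fw: "fwd e2 = 0" "fwd e3 = 0" by (simp_all add: fwd_def e2_def e3_def)
  have bw: "bwd n e2 = e2" "bwd n e3 = e3" by (simp_all add: bwd_def e2_def e3_def len23)
  have br23: "br e2 = 2" "br e3 = 3" by (simp_all add: e2_def e3_def)
  have ps23: "ps e2 = 1" "ps e3 = 1" by (simp_all add: e2_def e3_def)
  have p23: "pex n 2 = 0" "pex n 3 = 0" by (simp_all add: pex_def)
  have Q0: "QQ n e2 0 = QQ n e3 0"
    unfolding QQ_def using fw bw br23 p23 ne by (simp add: aa_def)
  have M0: "mm n e2 = mm n e3"
    using ne br23 ps23 p23 by (simp add: mm_def sg_def aa_def)
  show ?thesis unfolding is_eigenvalue_def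
  proof (intro exI conjI)
    show "\<exists>x\<in>SS n. f x \<noteq> 0" using e2S ne by (intro bexI[of _ e2]) (auto simp: f_def)
    show "\<forall>x\<in>SS n. (\<Sum>y\<in>SS n. PP n x y * f y) = rr n * f x"
    proof
      fix x assume x: "x \<in> SS n"
      show "(\<Sum>y\<in>SS n. PP n x y * f y) = rr n * f x"
      proof (cases "x = 0")
        case True
        have "PP n x e2 = PP n x e3" using True ne Q0 M0 by (simp add: PP_def)
        moreover have "f x = 0" using True ne by (simp add: f_def)
        ultimately show ?thesis by (simp only: sumf)
      next
        case xnz: False
        then obtain i j where ij: "x = enc i j" "(i,j) \<in> TT n" using x by (auto elim!: SS_cases simp: TT_def)
        have q2: "QQ n x e2 = (if x = e2 then rr n else 0)"
        proof -
          have "QQ n x e2 = (if 2 = i \<and> 1 + 1 = j then aa n i else 0) + (if 2 = i \<and> 1 = j + 1 then rr n else 0)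
             + (if 2 = i \<and> 1 = j \<and> j = len n i then rr n else 0)"
            unfolding ij(1) e2_def by (rule QQ_enc[OF ij(2) T2(1)])
          also have "\<dots> = (if x = e2 then rr n else 0)"
          proof (cases "i = 2")
            case True
            with ij(2) len23 have "j = 1" by (simp add: TT_def)
            thus ?thesis using True ij(1) len23 by (simp add: e2_def)
          next
            case False thus ?thesis using ij(1) by (simp add: e2_def)
          qed
          finally show ?thesis .
        qed
        have q3: "QQ n x e3 = (if x = e3 then rr n else 0)"
        proof -
          have "QQ n x e3 = (if 3 = i \<and> 1 + 1 = j then aa n i else 0) + (if 3 = i \<and> 1 = j + 1 then rr n else 0)
             + (if 3 = i \<and> 1 = j \<and> j = len n i then rr n else 0)"
            unfolding ij(1) e3_def by (rule QQ_enc[OF ij(2) T2(2)])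
          also have "\<dots> = (if x = e3 then rr n else 0)"
          proof (cases "i = 3")
            case True
            with ij(2) len23 have "j = 1" by (simp add: TT_def)
            thus ?thesis using True ij(1) len23 by (simp add: e3_def)
          next
            case False thus ?thesis using ij(1) by (simp add: e3_def)
          qed
          finally show ?thesis .
        qed
        have "PP n x e2 - PP n x e3 = QQ n x e2 - QQ n x e3" using xnz by (simp add: PP_nz)
        also have "\<dots> = rr n * f x" unfolding q2 q3 f_def using ne(1) by (cases "x = e2"; cases "x = e3") auto
        finally have "PP n x e2 - PP n x e3 = rr n * f x" .
        thus ?thesis by (simp only: sumf)
      qed
    qed
  qed
qed

lemma lambda2_le: "lambda2 (SS n) (PP n) \<le> rho n"
proof (rule lambda2_bound[OF finite_SS stoch _ reversible zero_SS, where h = "\<lambda>x. 2 ^ ps x"])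
  show "\<And>x. x \<in> SS n \<Longrightarrow> 0 < MU n x" by (rule MU_pos)
  show "\<And>x. x \<in> SS n - {0} \<Longrightarrow> 0 < (2::real) ^ ps x" by simp
  show "\<And>x. x \<in> SS n - {0} \<Longrightarrow> (\<Sum>y\<in>SS n - {0}. PP n x y * 2 ^ ps y) \<le> rho n * 2 ^ ps x"
    by (rule lyap_geo)
  show "rho n < 1" using rr_le[of n] by (simp add: rho_def)
  show "is_eigenvalue (SS n) (PP n) (rr n)" by (rule twin_eig)
  show "rr n < 1" using rr_le[of n] by simp
qed

lemma trel_bound: "0 < trel (SS n) (PP n)" "trel (SS n) (PP n) \<le> 4"
proof -
  have "lambda2 (SS n) (PP n) \<le> 1/2 + 2/4096" using lambda2_le[of n] rr_le[of n] by (simp add: rho_def)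
  hence d: "1/4 \<le> 1 - lambda2 (SS n) (PP n)" by simp
  show "0 < trel (SS n) (PP n)" using d by (simp add: trel_def)
  show "trel (SS n) (PP n) \<le> 4" using d by (simp add: trel_def divide_simps)
qed



section \<open>Expected hitting times\<close>

definition xst :: "nat \<Rightarrow> nat" where "xst n = enc 0 (10 * NN n)"

lemma xst_props: "xst n \<in> SS n" "xst n \<noteq> 0" "br (xst n) = 0" "ps (xst n) = 10 * NN n"
  using NN_ge[of n] by (auto simp: xst_def enc_SS_iff len_def enc_eq0)

lemma summ0: assumes x: "x \<in> SS n"
  shows "summable (\<lambda>k. avoid (PP n) (SS n) {0} k x)" "(\<Sum>k. avoid (PP n) (SS n) {0} k x) \<le> VV n x"
  using avoid_summable_bound[of "\<lambda>k. avoid (PP n) (SS n) {0} k x" "VV n x"]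
    avoid_bounds[OF stoch x] avoid_partial[OF x] by auto

lemma hexp0: assumes x: "x \<in> SS n"
  shows "hit_exp (PP n) (SS n) {0} x = (\<Sum>k. avoid (PP n) (SS n) {0} k x)"
    "hit_exp (PP n) (SS n) {0} x \<le> VV n x"
  using hit_exp_eq[OF stoch x summ0(1)[OF x]] summ0(2)[OF x] by auto

lemma hexp_mono: assumes x: "x \<in> SS n" and A: "0 \<in> A"
  shows "hit_exp (PP n) (SS n) A x \<le> hit_exp (PP n) (SS n) {0} x"
proof -
  have le: "avoid (PP n) (SS n) A k x \<le> avoid (PP n) (SS n) {0} k x" for k
    using avoid_mono_set[OF stoch x, of "{0}" A] A by auto
  have nn: "0 \<le> avoid (PP n) (SS n) A k x" for k using avoid_bounds[OF stoch x] by auto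
  have sA: "summable (\<lambda>k. avoid (PP n) (SS n) A k x)"
    by (rule summable_comparison_test'[OF summ0(1)[OF x]]) (use le nn in auto)
  have "hit_exp (PP n) (SS n) A x = (\<Sum>k. avoid (PP n) (SS n) A k x)" by (rule hit_exp_eq[OF stoch x sA])
  also have "\<dots> \<le> (\<Sum>k. avoid (PP n) (SS n) {0} k x)" by (rule suminf_le[OF le sA summ0(1)[OF x]])
  also have "\<dots> = hit_exp (PP n) (SS n) {0} x" using hexp0(1)[OF x] by simp
  finally show ?thesis .
qed

lemma E_lower: "real (10 * NN n) \<le> hit_exp (PP n) (SS n) {0} (xst n)"
proof -
  have "(\<Sum>k<10 * NN n. avoid (PP n) (SS n) {0} k (xst n)) = (\<Sum>k<10 * NN n. 1)"
    using avoid_ones[OF xst_props(1,2)] xst_props(3,4) by (intro sum.cong) auto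
  hence "real (10 * NN n) = (\<Sum>k<10 * NN n. avoid (PP n) (SS n) {0} k (xst n))" by simp
  also have "\<dots> \<le> (\<Sum>k. avoid (PP n) (SS n) {0} k (xst n))"
    using summ0(1)[OF xst_props(1)] avoid_bounds[OF stoch xst_props(1)] by (intro sum_le_suminf) auto
  finally show ?thesis using hexp0(1)[OF xst_props(1)] by simp
qed

lemma E_upper: "hit_exp (PP n) (SS n) {0} (xst n) \<le> real (10 * NN n) / (1 - 2 * rr n)"
  using hexp0(2)[OF xst_props(1)] xst_props(3,4) by (simp add: VV_def)

lemma rN: "real (NN n) * rr n \<le> 1 / 256"
proof -
  have N: "16 \<le> real (NN n)" using NN_ge[of n] by simp
  have "real (NN n) * rr n = 1 / real (NN n)^2" using N by (simp add: rr_def power2_eq_square power3_eq_cube)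
  also have "\<dots> \<le> 1 / 16^2" using N by (intro divide_left_mono power_mono) auto
  finally show ?thesis by simp
qed

lemma E_others: assumes x: "x \<in> SS n" "x \<noteq> xst n"
  shows "hit_exp (PP n) (SS n) {0} x < real (10 * NN n)"
proof (cases "x = 0")
  case True
  have "hit_exp (PP n) (SS n) {0} x = 0" using hexp0(1)[OF x(1)] True avoid_in[of 0 "{0}"] by simp
  thus ?thesis using NN_ge[of n] by simp
next
  case xnz: False
  have N: "16 \<le> real (NN n)" using NN_ge[of n] by simp
  have r: "0 < rr n" "rr n \<le> 1/4096" using rr_pos rr_le by auto
  have "VV n x < real (10 * NN n)"
  proof (cases "br x = 1")
    case True thus ?thesis using N by (simp add: VV_def)
  next
    case False
    have b: "br x < 4" "1 \<le> ps x" "ps x \<le> len n (br x)" using SS_nz[OF x(1) xnz] by auto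
    have pl: "ps x \<le> 10 * NN n - 1"
    proof (cases "br x = 0")
      case True
      hence "ps x \<noteq> 10 * NN n" using x(2) enc_br_ps[of x] by (auto simp: xst_def)
      thus ?thesis using b True by (simp add: len_def)
    next
      case F: False
      hence "ps x \<le> 1" using b False by (simp add: len_def)
      thus ?thesis using NN_ge[of n] by simp
    qed
    have "real (ps x) \<le> real (10 * NN n) - 1" using pl NN_ge[of n] by (simp add: of_nat_diff)
    moreover have "real (10 * NN n) - 1 < real (10 * NN n) * (1 - 2 * rr n)"
      using rN[of n] by (simp add: algebra_simps)
    ultimately have "real (ps x) < real (10 * NN n) * (1 - 2 * rr n)" by linarith
    thus ?thesis using False r by (simp add: VV_def divide_simps)
  qed
  thus ?thesis using hexp0(2)[OF x(1)] by linarith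
qed

lemma mass_half: assumes A: "A \<subseteq> SS n" and m: "1/2 \<le> (\<Sum>y\<in>A. MU n y)" shows "0 \<in> A"
proof (rule ccontr)
  assume "0 \<notin> A"
  hence "A \<subseteq> SS n - {0}" using A by auto
  hence "(\<Sum>y\<in>A. MU n y) \<le> (\<Sum>y\<in>SS n - {0}. MU n y)"
    using finite_SS[of n] MU_pos[of n] by (intro sum_mono2) (auto intro: less_imp_le)
  also have "\<dots> = 1 - MU n 0" using MU_sum[of n] sum_diff1[OF finite_SS[of n], of "MU n" 0] zero_SS[of n] by simp
  also have "\<dots> \<le> 16 * rr n" by (rule MU0)
  also have "\<dots> < 1/2" using rr_le[of n] by simp
  finally show False using m by simp
qed

lemma MU0_half: "1/2 \<le> MU n 0" using MU0[of n] rr_le[of n] by simp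

lemma tH_eq: "hit_exp (PP n) (SS n) {0} (xst n) = tH (SS n) (PP n) (MU n) (1/2)"
proof -
  define Y where "Y = {hit_exp (PP n) (SS n) A x | x A. x \<in> SS n \<and> A \<subseteq> SS n \<and> (\<Sum>y\<in>A. MU n y) \<ge> 1/2}"
  have fin: "finite Y"
  proof -
    have "Y \<subseteq> (\<lambda>(x, A). hit_exp (PP n) (SS n) A x) ` (SS n \<times> Pow (SS n))" by (auto simp: Y_def)
    moreover have "finite (SS n \<times> Pow (SS n))" using finite_SS[of n] by simp
    ultimately show ?thesis using finite_subset by blast
  qed
  have mem: "hit_exp (PP n) (SS n) {0} (xst n) \<in> Y"
    using xst_props(1) zero_SS[of n] MU0_half[of n] unfolding Y_def by fastforce
  have le: "\<forall>y\<in>Y. y \<le> hit_exp (PP n) (SS n) {0} (xst n)"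
  proof
    fix y assume "y \<in> Y"
    then obtain x A where y: "y = hit_exp (PP n) (SS n) A x" and x: "x \<in> SS n" and A: "A \<subseteq> SS n"
      and m: "1/2 \<le> (\<Sum>y\<in>A. MU n y)" unfolding Y_def by blast
    have "y \<le> hit_exp (PP n) (SS n) {0} x" using hexp_mono[OF x mass_half[OF A m]] y by simp
    also have "\<dots> \<le> hit_exp (PP n) (SS n) {0} (xst n)"
    proof (cases "x = xst n")
      case True thus ?thesis by simp
    next
      case False thus ?thesis using E_others[OF x False] E_lower[of n] by linarith
    qed
    finally show "y \<le> hit_exp (PP n) (SS n) {0} (xst n)" .
  qed
  have "Max Y = hit_exp (PP n) (SS n) {0} (xst n)" using fin mem le by (intro Max_eqI) auto
  thus ?thesis by (simp add: tH_def Y_def)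
qed



definition bM :: "nat \<Rightarrow> nat" where "bM n = enc 1 (20 * NN n)"

lemma bM_props: "bM n \<in> SS n" "bM n \<noteq> 0" "br (bM n) = 1" "ps (bM n) = 20 * NN n"
  using NN_ge[of n] by (auto simp: bM_def enc_SS_iff len_def enc_eq0)

lemma rho_bounds: "0 \<le> rho n" "rho n \<le> 1" using rr_pos[of n] rr_le[of n] by (auto simp: rho_def)
lemma pex1: "pex n 1 = 1 / (8 * real (NN n))" by (simp add: pex_def)
lemma p_bounds: "0 \<le> 1 - pex n 1" "1 - pex n 1 \<le> 1" using pex_le[of n 1] pex_nonneg[of n 1] by auto

definition BB :: "nat \<Rightarrow> nat \<Rightarrow> real" where
  "BB n m = (1 - pex n 1) ^ m + rho n ^ m * 2 ^ (10 * NN n)"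

lemma avoid_uniform: assumes x: "x \<in> SS n"
  shows "avoid (PP n) (SS n) {0} k x \<le> BB n k"
proof -
  have t1: "0 \<le> (1 - pex n 1) ^ k" and t2: "0 \<le> rho n ^ k * 2 ^ (10 * NN n)"
    using p_bounds[of n] rho_bounds[of n] by auto
  show ?thesis
  proof (cases "x = 0")
    case True thus ?thesis using avoid_in[of 0 "{0}"] t1 t2 by (simp add: BB_def)
  next
    case xnz: False
    show ?thesis
    proof (cases "br x = 1")
      case True thus ?thesis using avoid_br1[OF x xnz True, of k] t2 unfolding BB_def by linarith
    next
      case False
      have "ps x \<le> 10 * NN n" using SS_nz[OF x xnz] False NN_ge[of n] by (auto simp: len_def split: if_splits)
      hence "(2::real) ^ ps x \<le> 2 ^ (10 * NN n)" by (intro power_increasing) auto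
      hence "rho n ^ k * 2 ^ ps x \<le> rho n ^ k * 2 ^ (10 * NN n)" using rho_bounds[of n] by (intro mult_left_mono) auto
      thus ?thesis using avoid_geo[OF x, of k] t1 by (simp add: BB_def)
    qed
  qed
qed

lemma BB_mono: "m \<le> k \<Longrightarrow> BB n k \<le> BB n m"
proof -
  assume mk: "m \<le> k"
  have "(1 - pex n 1) ^ k \<le> (1 - pex n 1) ^ m" using p_bounds[of n] mk by (intro power_decreasing) auto
  moreover have "rho n ^ k \<le> rho n ^ m" using rho_bounds[of n] mk by (intro power_decreasing) auto
  hence "rho n ^ k * 2 ^ (10 * NN n) \<le> rho n ^ m * 2 ^ (10 * NN n)" by (rule mult_right_mono) simp
  ultimately show ?thesis unfolding BB_def by (rule add_mono)
qed

lemma hit_gt_upper_all: assumes x: "x \<in> SS n" and u: "1 \<le> u" and t: "u * real m \<le> t"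
  shows "hit_gt (PP n) (SS n) {0} x t \<le> BB n m + (u * exp (1 - u)) ^ m"
proof -
  have "0 \<le> u * real m" using u by simp
  hence t0: "0 \<le> t" using t by linarith
  have "(\<Sum>k. pois t k * avoid (PP n) (SS n) {0} k x) \<le> BB n m + (u * exp (1 - u)) ^ m"
  proof (rule pois_upper[OF t u])
    show "\<And>k. 0 \<le> avoid (PP n) (SS n) {0} k x" "\<And>k. avoid (PP n) (SS n) {0} k x \<le> 1"
      using avoid_bounds[OF stoch x] by auto
    show "\<And>k. m \<le> k \<Longrightarrow> avoid (PP n) (SS n) {0} k x \<le> BB n m"
      using avoid_uniform[OF x] BB_mono order_trans by blast
    show "0 \<le> BB n m" using p_bounds[of n] rho_bounds[of n] by (simp add: BB_def)
  qed
  thus ?thesis using hit_gt_eq[OF t0] by simp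
qed

lemma dist_upper_chain: assumes t: "0 \<le> t" and b: "\<And>x. x \<in> SS n \<Longrightarrow> hit_gt (PP n) (SS n) {0} x t \<le> b"
  shows "dist_stat (SS n) (PP n) (MU n) t \<le> 16 * rr n + b + t * (16 * rr n)"
proof -
  have "dist_stat (SS n) (PP n) (MU n) t \<le> (1 - MU n 0) + b + t * (1 - PP n 0 0)"
    using MU_pos[of n] MU_sum[of n] b
    by (intro dist_upper[OF finite_SS stoch zero_SS t]) (auto intro: less_imp_le)
  also have "\<dots> \<le> 16 * rr n + b + t * (16 * rr n)"
    using MU0[of n] PP00[of n] t by (intro add_mono mult_left_mono) auto
  finally show ?thesis .
qed

lemma dist_lower_chain: assumes x: "x \<in> SS n" and t: "0 \<le> t"
  shows "hit_gt (PP n) (SS n) {0} x t - 16 * rr n \<le> dist_stat (SS n) (PP n) (MU n) t"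
  using dist_lower[OF finite_SS stoch zero_SS x t, of "MU n"] MU0[of n] by linarith

lemma hit_gt_xst_lower: assumes t: "0 \<le> t" "t \<le> u * real (10 * NN n)" and u: "0 < u" "u \<le> 1"
  shows "1 - (u * exp (1 - u)) ^ (10 * NN n) \<le> hit_gt (PP n) (SS n) {0} (xst n) t"
proof -
  have "1 * (1 - (u * exp (1 - u)) ^ (10 * NN n)) \<le> (\<Sum>k. pois t k * avoid (PP n) (SS n) {0} k (xst n))"
  proof (rule pois_lower[OF t u])
    show "\<And>k. 0 \<le> avoid (PP n) (SS n) {0} k (xst n)" "\<And>k. avoid (PP n) (SS n) {0} k (xst n) \<le> 1"
      using avoid_bounds[OF stoch xst_props(1)] by auto
    show "\<And>k. k < 10 * NN n \<Longrightarrow> 1 \<le> avoid (PP n) (SS n) {0} k (xst n)"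
      using avoid_ones[OF xst_props(1,2)] xst_props(3,4) by simp
  qed simp
  thus ?thesis using hit_gt_eq[OF t(1)] by simp
qed

lemma hit_gt_bM_lower: assumes t: "0 \<le> t" "t \<le> u * real (16 * NN n)" and u: "0 < u" "u \<le> 1"
  shows "aa n 1 ^ (16 * NN n) * (1 - (u * exp (1 - u)) ^ (16 * NN n)) \<le> hit_gt (PP n) (SS n) {0} (bM n) t"
proof -
  have "aa n 1 ^ (16 * NN n) * (1 - (u * exp (1 - u)) ^ (16 * NN n)) \<le> (\<Sum>k. pois t k * avoid (PP n) (SS n) {0} k (bM n))"
  proof (rule pois_lower[OF t u])
    show "\<And>k. 0 \<le> avoid (PP n) (SS n) {0} k (bM n)" "\<And>k. avoid (PP n) (SS n) {0} k (bM n) \<le> 1"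
      using avoid_bounds[OF stoch bM_props(1)] by auto
    show "0 \<le> aa n 1 ^ (16 * NN n)" using aa_ge[of n 1] by simp
    fix k assume k: "k < 16 * NN n"
    have "aa n 1 ^ (16 * NN n) \<le> aa n 1 ^ k" using k aa_ge[of n 1] aa_le[of n 1] by (intro power_decreasing) auto
    also have "\<dots> \<le> avoid (PP n) (SS n) {0} k (bM n)"
      using avoid_br1_lower[OF bM_props(1,2,3)] bM_props(4) k by simp
    finally show "aa n 1 ^ (16 * NN n) \<le> avoid (PP n) (SS n) {0} k (bM n)" .
  qed
  thus ?thesis using hit_gt_eq[OF t(1)] by simp
qed

lemma aa_pow_lower: "1 / 21 \<le> aa n 1 ^ (16 * NN n)"
proof -
  define N where "N = real (NN n)"
  have N: "16 \<le> N" using NN_ge[of n] by (simp add: N_def)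
  define x where "x = 1 / (8 * N) + rr n"
  have aax: "aa n 1 = 1 - x" by (simp add: aa_def pex_def x_def N_def)
  have r: "rr n = 1 / N ^ 3" by (simp add: rr_def N_def)
  have rx: "rr n \<le> 1 / (8 * N)"
  proof -
    have "8 \<le> N * N" using N mult_mono[of 16 N 16 N] by simp
    hence "N * 8 \<le> N * (N * N)" using N by (intro mult_left_mono) auto
    hence "8 * N \<le> N ^ 3" by (simp add: power3_eq_cube mult.commute)
    thus ?thesis unfolding r using N by (intro divide_left_mono) auto
  qed
  have x0: "0 \<le> x" using rr_pos[of n] N by (simp add: x_def)
  have x4: "x \<le> 1 / (4 * N)" using rx by (simp add: x_def)
  moreover have "1 / (4 * N) \<le> 1/2" using N by (simp add: divide_simps)
  ultimately have xh: "x \<le> 1/2" by linarith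
  have "- x - 2 * x^2 \<le> ln (1 - x)" by (rule ln_one_minus_pos_lower_bound[OF x0 xh])
  hence "real (16 * NN n) * (- x - 2 * x^2) \<le> real (16 * NN n) * ln (1 - x)" by (intro mult_left_mono) auto
  moreover have "real (16 * NN n) * ln (1 - x) = ln ((1 - x) ^ (16 * NN n))"
    using xh by (simp add: ln_realpow)
  moreover have "-3 \<le> real (16 * NN n) * (- x - 2 * x^2)"
  proof -
    have "16 * N * x = 2 + 16 * N * rr n" using N by (simp add: x_def field_simps)
    moreover have "N * rr n \<le> 1/256" using rN[of n] by (simp add: N_def)
    moreover have "N * x^2 \<le> 1 / (16 * N)"
    proof -
      have "x^2 \<le> (1 / (4 * N))^2" using x0 x4 by (intro power_mono) auto
      hence "N * x^2 \<le> N * (1 / (4 * N))^2" using N by (intro mult_left_mono) auto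
      also have "\<dots> = 1 / (16 * N)" using N by (simp add: power2_eq_square field_simps)
      finally show ?thesis .
    qed
    moreover have "1 / (16 * N) \<le> 1 / 256" using N by (simp add: divide_simps)
    ultimately have "16 * N * x + 32 * (N * x^2) \<le> 3" by linarith
    thus ?thesis by (simp add: N_def algebra_simps)
  qed
  ultimately have "-3 \<le> ln ((1 - x) ^ (16 * NN n))" by linarith
  moreover have "0 < (1 - x) ^ (16 * NN n)" using xh by simp
  ultimately have "exp (-3) \<le> (1 - x) ^ (16 * NN n)"
    using exp_le_cancel_iff[of "-3" "ln ((1 - x) ^ (16 * NN n))"] exp_ln by simp
  moreover have "1 / 21 \<le> exp (-3::real)"
  proof -
    have "exp (3::real) = exp 1 ^ 3" by (simp add: exp_of_nat_mult[symmetric])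
    also have "\<dots> \<le> (272/100) ^ 3" using e_less_272 by (intro power_mono) auto
    also have "(272/100::real) ^ 3 \<le> 21" by (simp add: power3_eq_cube)
    finally have "exp (3::real) \<le> 21" .
    thus ?thesis by (simp add: exp_minus divide_simps)
  qed
  ultimately show ?thesis using aax by simp
qed

lemma rho_pow: assumes "10 * NN n \<le> m"
  shows "rho n ^ m * 2 ^ (10 * NN n) \<le> exp (4 * rr n * real m) * (1/2) ^ (m - 10 * NN n)"
proof -
  have rh: "rho n = (1 + 4 * rr n) * (1/2)" by (simp add: rho_def)
  have eq1: "rho n ^ m = (1 + 4 * rr n) ^ m * (1/2)^m" unfolding rh by (rule power_mult_distrib)
  have le1: "(1 + 4 * rr n) ^ m \<le> exp (4 * rr n) ^ m"
    using rr_pos[of n] exp_ge_add_one_self[of "4 * rr n"] by (intro power_mono) auto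
  have eq2: "exp (4 * rr n) ^ m = exp (4 * rr n * real m)" by (simp add: exp_of_nat_mult[symmetric] mult.commute)
  have eq3: "(1/2::real)^m * 2 ^ (10 * NN n) = (1/2) ^ (m - 10 * NN n)"
  proof -
    have "m = (m - 10 * NN n) + 10 * NN n" using assms by simp
    hence "(1/2::real)^m = (1/2)^(m - 10 * NN n) * (1/2)^(10 * NN n)" by (metis power_add)
    thus ?thesis by (simp add: power_one_over)
  qed
  have "rho n ^ m * 2 ^ (10 * NN n) = (1 + 4 * rr n) ^ m * ((1/2)^m * 2 ^ (10 * NN n))"
    unfolding eq1 by (simp add: mult.assoc)
  also have "\<dots> = (1 + 4 * rr n) ^ m * (1/2) ^ (m - 10 * NN n)" unfolding eq3 ..
  also have "\<dots> \<le> exp (4 * rr n * real m) * (1/2) ^ (m - 10 * NN n)"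
    using le1 unfolding eq2 by (intro mult_right_mono) auto
  finally show ?thesis .
qed

lemma exp_pow_bound: "(1 - pex n 1) ^ m \<le> exp (- real m / (8 * real (NN n)))"
proof -
  have "(1 - pex n 1) ^ m \<le> exp (- pex n 1) ^ m"
    using p_bounds[of n] exp_ge_add_one_self[of "- pex n 1"] by (intro power_mono) auto
  also have "\<dots> = exp (- real m / (8 * real (NN n)))" by (simp add: exp_of_nat_mult[symmetric] pex_def)
  finally show ?thesis .
qed



lemma ev_N: "eventually (\<lambda>n. K \<le> real (NN n)) sequentially"
proof (rule eventually_sequentiallyI[of "nat \<lceil>K\<rceil>"])
  fix n assume "nat \<lceil>K\<rceil> \<le> n"
  hence "K \<le> real n" by linarith
  thus "K \<le> real (NN n)" by (simp add: NN_def)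
qed

lemma Nr_eq: "real (NN n) * rr n = 1 / real (NN n) ^ 2"
  using NN_ge[of n] by (simp add: rr_def power2_eq_square power3_eq_cube)

lemma ev_Nr: assumes e: "0 < e" shows "eventually (\<lambda>n. real (NN n) * rr n \<le> e \<and> rr n \<le> e) sequentially"
  using ev_N[of "1 / e"]
proof (rule eventually_mono)
  fix n assume n: "1 / e \<le> real (NN n)"
  have N: "16 \<le> real (NN n)" using NN_ge[of n] by simp
  have "real (NN n) * rr n = 1 / real (NN n) ^ 2" by (rule Nr_eq)
  also have "\<dots> \<le> 1 / real (NN n)" using N by (simp add: divide_simps power2_eq_square)
  also have "\<dots> \<le> e" using n e N by (simp add: divide_simps mult.commute)
  finally have a: "real (NN n) * rr n \<le> e" .
  have "rr n \<le> real (NN n) * rr n" using N rr_pos[of n] by simp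
  thus "real (NN n) * rr n \<le> e \<and> rr n \<le> e" using a by simp
qed

lemma ev_pow: assumes b: "0 \<le> b" "b < (1::real)" and e: "0 < e" and f: "\<And>K. eventually (\<lambda>n. K \<le> f n) sequentially"
  shows "eventually (\<lambda>n. b ^ f n \<le> e) sequentially"
proof -
  have "(\<lambda>n. b ^ n) \<longlonglongrightarrow> 0" using b by (intro LIMSEQ_power_zero) simp
  hence "eventually (\<lambda>n. b ^ n < e) sequentially" using e by (rule order_tendstoD(2))
  then obtain K where K: "b ^ K < e" by (auto simp: eventually_sequentially)
  show ?thesis using f[of K]
  proof (rule eventually_mono)
    fix n assume "K \<le> f n"
    hence "b ^ f n \<le> b ^ K" using b by (intro power_decreasing) auto
    thus "b ^ f n \<le> e" using K by simp
  qed
qed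

lemma ev_lin: assumes "0 < (c::nat)" shows "eventually (\<lambda>n. K \<le> c * NN n) sequentially"
proof (rule eventually_sequentiallyI[of K])
  fix x assume "K \<le> x"
  also have "x \<le> c * x" using assms by simp
  also have "\<dots> \<le> c * NN x" by (simp add: NN_def)
  finally show "K \<le> c * NN x" .
qed

lemma beta_facts: fixes u :: real assumes "0 < u" "u \<noteq> 1"
  shows "0 \<le> u * exp (1 - u)" "u * exp (1 - u) < 1" using beta_lt1[OF assms] by auto

abbreviation dd where "dd n t \<equiv> dist_stat (SS n) (PP n) (MU n) t"
abbreviation tm where "tm n e \<equiv> tmix (SS n) (PP n) (MU n) e"

lemma hit_gt_01: assumes x: "x \<in> SS n" shows "0 \<le> hit_gt (PP n) (SS n) {0} x t" "hit_gt (PP n) (SS n) {0} x t \<le> 1"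
proof -
  have "0 \<le> hit_gt (PP n) (SS n) {0} x t \<and> hit_gt (PP n) (SS n) {0} x t \<le> 1"
  proof (cases "t < 0")
    case True thus ?thesis by (simp add: hit_gt_def)
  next
    case False
    hence t: "0 \<le> t" by simp
    have a: "\<And>k. 0 \<le> avoid (PP n) (SS n) {0} k x" "\<And>k. avoid (PP n) (SS n) {0} k x \<le> 1"
      using avoid_bounds[OF stoch x] by auto
    have s: "summable (\<lambda>k. pois t k * avoid (PP n) (SS n) {0} k x)" using a t by (intro summable_pois_bounded) auto
    have "0 \<le> (\<Sum>k. pois t k * avoid (PP n) (SS n) {0} k x)"
      using s a pois_nonneg[OF t] by (intro suminf_nonneg) auto
    moreover have "(\<Sum>k. pois t k * avoid (PP n) (SS n) {0} k x) \<le> (\<Sum>k. pois t k)"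
      using s a pois_nonneg[OF t] pois_sums[of t] by (intro suminf_le) (auto simp: sums_iff mult_left_le)
    ultimately show ?thesis using hit_gt_eq[OF t] pois_sums[of t] by (simp add: sums_iff)
  qed
  thus "0 \<le> hit_gt (PP n) (SS n) {0} x t" "hit_gt (PP n) (SS n) {0} x t \<le> 1" by auto
qed

lemma evA: "eventually (\<lambda>n. \<forall>t. 0 \<le> t \<and> t \<le> 8 * real (NN n) \<longrightarrow> 39/40 < dd n t) sequentially"
proof -
  define b where "b = (4/5::real) * exp (1 - 4/5)"
  have b: "0 \<le> b" "b < 1" using beta_facts[of "4/5"] by (auto simp: b_def)
  have e1: "eventually (\<lambda>n. b ^ (10 * NN n) \<le> 1/100) sequentially"
    using ev_pow[OF b, of "1/100" "\<lambda>n. 10 * NN n"] ev_lin[of 10] by (simp add: of_nat_mult)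
  have e2: "eventually (\<lambda>n. real (NN n) * rr n \<le> 1/10000 \<and> rr n \<le> 1/10000) sequentially" by (rule ev_Nr) simp
  show ?thesis using e1 e2
  proof eventually_elim
    case (elim n)
    show ?case
    proof (intro allI impI)
      fix t assume t: "0 \<le> t \<and> t \<le> 8 * real (NN n)"
      have "1 - b ^ (10 * NN n) \<le> hit_gt (PP n) (SS n) {0} (xst n) t"
        unfolding b_def by (rule hit_gt_xst_lower) (use t in auto)
      moreover have "hit_gt (PP n) (SS n) {0} (xst n) t - 16 * rr n \<le> dd n t"
        by (rule dist_lower_chain[OF xst_props(1)]) (use t in auto)
      ultimately show "39/40 < dd n t" using elim(1) elim(2)[THEN conjunct2] by linarith
    qed
  qed
qed

lemma exp_m1: "exp (-1::real) \<le> 1/2"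
proof -
  have "2 \<le> exp (1::real)" using exp_ge_add_one_self[of "1::real"] by simp
  thus ?thesis by (simp add: exp_minus divide_simps)
qed

lemma exp_le3: "x \<le> 1 \<Longrightarrow> exp (x::real) \<le> 3"
  using exp_le exp_le_cancel_iff[of x 1] by linarith

lemma exp_m50: "exp (-50::real) \<le> 1/51"
proof -
  have "51 \<le> exp (50::real)" using exp_ge_add_one_self[of "50::real"] by simp
  thus ?thesis by (simp add: exp_minus divide_simps)
qed

lemma BB_bound: assumes "10 * NN n \<le> m"
  shows "BB n m \<le> exp (- real m / (8 * real (NN n))) + exp (4 * rr n * real m) * (1/2) ^ (m - 10 * NN n)"
  using exp_pow_bound[of n m] rho_pow[OF assms] by (simp add: BB_def)

lemma evB: "eventually (\<lambda>n. dd n (12 * real (NN n)) \<le> 39/40) sequentially"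
proof -
  define b where "b = (12/11::real) * exp (1 - 12/11)"
  have b: "0 \<le> b" "b < 1" using beta_facts[of "12/11"] by (auto simp: b_def)
  have e1: "eventually (\<lambda>n. b ^ (11 * NN n) \<le> 1/100) sequentially"
    using ev_pow[OF b, of "1/100" "\<lambda>n. 11 * NN n"] ev_lin[of 11] by simp
  have e2: "eventually (\<lambda>n. (1/2::real) ^ (1 * NN n) \<le> 1/300) sequentially"
    using ev_pow[of "1/2" "1/300" "\<lambda>n. 1 * NN n"] ev_lin[of 1] by simp
  have e3: "eventually (\<lambda>n. real (NN n) * rr n \<le> 1/20000 \<and> rr n \<le> 1/20000) sequentially" by (rule ev_Nr) simp
  show ?thesis using e1 e2 e3
  proof eventually_elim
    case (elim n)
    have N: "16 \<le> real (NN n)" using NN_ge[of n] by simp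
    have Nr: "real (NN n) * rr n \<le> 1/20000" "rr n \<le> 1/20000" using elim(3) by auto
    have BB: "BB n (11 * NN n) \<le> 1/2 + 3 * (1/2) ^ NN n"
    proof -
      have "BB n (11 * NN n) \<le> exp (- real (11 * NN n) / (8 * real (NN n))) + exp (4 * rr n * real (11 * NN n)) * (1/2) ^ (11 * NN n - 10 * NN n)"
        by (rule BB_bound) simp
      also have "exp (- real (11 * NN n) / (8 * real (NN n))) \<le> 1/2"
      proof -
        have "- real (11 * NN n) / (8 * real (NN n)) \<le> -1" using N by (simp add: divide_simps)
        hence "exp (- real (11 * NN n) / (8 * real (NN n))) \<le> exp (-1)" by simp
        thus ?thesis using exp_m1 by linarith
      qed
      also have "exp (4 * rr n * real (11 * NN n)) \<le> 3"
        using Nr by (intro exp_le3) (simp add: algebra_simps)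
      also have "(11 * NN n - 10 * NN n) = NN n" by simp
      finally show ?thesis by (simp add: mult_right_mono)
    qed
    have hx: "hit_gt (PP n) (SS n) {0} x (12 * real (NN n)) \<le> 1/2 + 3 * (1/2) ^ NN n + b ^ (11 * NN n)"
      if x: "x \<in> SS n" for x
    proof -
      have "hit_gt (PP n) (SS n) {0} x (12 * real (NN n)) \<le> BB n (11 * NN n) + b ^ (11 * NN n)"
        unfolding b_def by (rule hit_gt_upper_all[OF x]) auto
      thus ?thesis using BB by linarith
    qed
    have "dd n (12 * real (NN n)) \<le> 16 * rr n + (1/2 + 3 * (1/2) ^ NN n + b ^ (11 * NN n)) + 12 * real (NN n) * (16 * rr n)"
      by (rule dist_upper_chain) (use hx in auto)
    also have "\<dots> \<le> 39/40" using elim(1) elim(2) Nr by (simp add: algebra_simps)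
    finally show ?case .
  qed
qed

lemma evC: "eventually (\<lambda>n. dd n (440 * real (NN n)) \<le> 1/40) sequentially"
proof -
  define b where "b = (11/10::real) * exp (1 - 11/10)"
  have b: "0 \<le> b" "b < 1" using beta_facts[of "11/10"] by (auto simp: b_def)
  have e1: "eventually (\<lambda>n. b ^ (400 * NN n) \<le> 1/1000) sequentially"
    using ev_pow[OF b, of "1/1000" "\<lambda>n. 400 * NN n"] ev_lin[of 400] by simp
  have e2: "eventually (\<lambda>n. (1/2::real) ^ (390 * NN n) \<le> 1/3000) sequentially"
    using ev_pow[of "1/2" "1/3000" "\<lambda>n. 390 * NN n"] ev_lin[of 390] by simp
  have e3: "eventually (\<lambda>n. real (NN n) * rr n \<le> 1/10000000 \<and> rr n \<le> 1/10000000) sequentially" by (rule ev_Nr) simp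
  show ?thesis using e1 e2 e3
  proof eventually_elim
    case (elim n)
    have N: "16 \<le> real (NN n)" using NN_ge[of n] by simp
    have Nr: "real (NN n) * rr n \<le> 1/10000000" "rr n \<le> 1/10000000" using elim(3) by auto
    have BB: "BB n (400 * NN n) \<le> 1/51 + 3 * (1/2) ^ (390 * NN n)"
    proof -
      have "BB n (400 * NN n) \<le> exp (- real (400 * NN n) / (8 * real (NN n))) + exp (4 * rr n * real (400 * NN n)) * (1/2) ^ (400 * NN n - 10 * NN n)"
        by (rule BB_bound) simp
      also have "exp (- real (400 * NN n) / (8 * real (NN n))) \<le> 1/51"
      proof -
        have "- real (400 * NN n) / (8 * real (NN n)) = -50" using N by (simp add: divide_simps)
        thus ?thesis using exp_m50 by simp
      qed
      also have "exp (4 * rr n * real (400 * NN n)) \<le> 3"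
        using Nr by (intro exp_le3) (simp add: algebra_simps)
      also have "(400 * NN n - 10 * NN n) = 390 * NN n" by simp
      finally show ?thesis by (simp add: mult_right_mono)
    qed
    have hx: "hit_gt (PP n) (SS n) {0} x (440 * real (NN n)) \<le> 1/51 + 3 * (1/2) ^ (390 * NN n) + b ^ (400 * NN n)"
      if x: "x \<in> SS n" for x
    proof -
      have "hit_gt (PP n) (SS n) {0} x (440 * real (NN n)) \<le> BB n (400 * NN n) + b ^ (400 * NN n)"
        unfolding b_def by (rule hit_gt_upper_all[OF x]) auto
      thus ?thesis using BB by linarith
    qed
    have "dd n (440 * real (NN n)) \<le> 16 * rr n + (1/51 + 3 * (1/2) ^ (390 * NN n) + b ^ (400 * NN n)) + 440 * real (NN n) * (16 * rr n)"
      by (rule dist_upper_chain) (use hx in auto)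
    also have "\<dots> \<le> 1/40" using elim(1) elim(2) Nr by (simp add: algebra_simps)
    finally show ?case .
  qed
qed

lemma evD: "eventually (\<lambda>n. \<forall>t. 0 \<le> t \<and> t < 14 * real (NN n) \<longrightarrow> 1/40 < dd n t) sequentially"
proof -
  define b where "b = (7/8::real) * exp (1 - 7/8)"
  have b: "0 \<le> b" "b < 1" using beta_facts[of "7/8"] by (auto simp: b_def)
  have e1: "eventually (\<lambda>n. b ^ (16 * NN n) \<le> 1/10) sequentially"
    using ev_pow[OF b, of "1/10" "\<lambda>n. 16 * NN n"] ev_lin[of 16] by simp
  have e2: "eventually (\<lambda>n. real (NN n) * rr n \<le> 1/10000 \<and> rr n \<le> 1/10000) sequentially" by (rule ev_Nr) simp
  show ?thesis using e1 e2
  proof eventually_elim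
    case (elim n)
    show ?case
    proof (intro allI impI)
      fix t assume t: "0 \<le> t \<and> t < 14 * real (NN n)"
      have "aa n 1 ^ (16 * NN n) * (1 - b ^ (16 * NN n)) \<le> hit_gt (PP n) (SS n) {0} (bM n) t"
        unfolding b_def by (rule hit_gt_bM_lower) (use t in auto)
      moreover have "1/21 * (1 - b ^ (16 * NN n)) \<le> aa n 1 ^ (16 * NN n) * (1 - b ^ (16 * NN n))"
        using aa_pow_lower[of n] elim(1) b by (intro mult_right_mono) auto
      moreover have "hit_gt (PP n) (SS n) {0} (bM n) t - 16 * rr n \<le> dd n t"
        by (rule dist_lower_chain[OF bM_props(1)]) (use t in auto)
      moreover have "3/70 \<le> 1/21 * (1 - b ^ (16 * NN n))" using elim(1) by simp
      ultimately show "1/40 < dd n t" using elim(2)[THEN conjunct2] by linarith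
    qed
  qed
qed



lemma evT: "eventually (\<lambda>n. 8 * real (NN n) \<le> tm n (1/4) \<and> 8 * real (NN n) \<le> tm n (39/40)
   \<and> tm n (39/40) \<le> 12 * real (NN n) \<and> 14 * real (NN n) \<le> tm n (1/40)) sequentially"
  using evA evB evC evD
proof eventually_elim
  case (elim n)
  have p440: "0 \<le> 440 * real (NN n)" by simp
  have a: "8 * real (NN n) \<le> tm n (1/4)"
    by (rule tmix_ge[OF p440]) (use elim in \<open>auto intro: order.strict_trans2[of _ "39/40"]\<close>)
  have b: "8 * real (NN n) \<le> tm n (39/40)"
    by (rule tmix_ge[OF p440]) (use elim in auto)
  have c: "tm n (39/40) \<le> 12 * real (NN n)"
    by (rule tmix_le) (use elim in auto)
  have d: "14 * real (NN n) \<le> tm n (1/40)"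
    by (rule tmix_ge[OF p440]) (use elim in auto)
  show ?case using a b c d by blast
qed

section \<open>Concentration\<close>

lemma conc: assumes eps: "0 < eps"
  shows "(\<lambda>n. hit_dev_prob (PP n) (SS n) {0} (xst n) eps) \<longlonglongrightarrow> 0"
proof (rule tendstoI)
  fix e :: real assume e: "0 < e"
  define M where "M = nat \<lceil>10 / eps\<rceil> + 1"
  have M: "0 < M" "10 / eps \<le> real M" by (auto simp: M_def) linarith
  define u1 where "u1 = (1 + eps) / (1 + eps / 100)"
  have u1: "1 < u1" using eps by (simp add: u1_def divide_simps)
  define b1 where "b1 = u1 * exp (1 - u1)"
  have b1: "0 \<le> b1" "b1 < 1" using beta_facts[of u1] u1 by (auto simp: b1_def)
  define u2 where "u2 = 1 - eps / 2"
  define b2 where "b2 = u2 * exp (1 - u2)"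
  have b2: "eps < 1 \<Longrightarrow> 0 \<le> b2 \<and> b2 < 1" using beta_facts[of u2] eps by (auto simp: b2_def u2_def)
  define q where "q n = NN n div M" for n
  have evq: "eventually (\<lambda>n. K \<le> q n) sequentially" for K
  proof (rule eventually_sequentiallyI[of "K * M"])
    fix n assume "K * M \<le> n"
    hence "K * M \<le> NN n" by (simp add: NN_def)
    hence "K * M div M \<le> NN n div M" by (rule div_le_mono)
    thus "K \<le> q n" using M by (simp add: q_def)
  qed
  have e1: "eventually (\<lambda>n. (1/2::real) ^ q n \<le> e / 12) sequentially"
    by (rule ev_pow) (use e evq in auto)
  have e2: "eventually (\<lambda>n. b1 ^ (10 * NN n) \<le> e / 4) sequentially"
    by (rule ev_pow[OF b1]) (use e ev_lin[of 10] in auto)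
  have e3: "eventually (\<lambda>n. eps < 1 \<longrightarrow> b2 ^ (10 * NN n) \<le> e / 4) sequentially"
  proof (cases "eps < 1")
    case True thus ?thesis using ev_pow[of b2 "e/4" "\<lambda>n. 10 * NN n"] b2 e ev_lin[of 10] by simp
  next
    case False thus ?thesis by simp
  qed
  have e4: "eventually (\<lambda>n. real (NN n) * rr n \<le> min (eps / 4) (1/256) \<and> rr n \<le> min (eps / 4) (1/256)) sequentially"
    by (rule ev_Nr) (use eps in simp)
  show "eventually (\<lambda>n. dist (hit_dev_prob (PP n) (SS n) {0} (xst n) eps) 0 < e) sequentially"
    using e1 e2 e3 e4
  proof eventually_elim
    case (elim n)
    define N where "N = real (NN n)"
    have N: "16 \<le> N" using NN_ge[of n] by (simp add: N_def)
    define E where "E = hit_exp (PP n) (SS n) {0} (xst n)"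
    have EL: "10 * N \<le> E" using E_lower[of n] by (simp add: E_def N_def)
    have EU: "E \<le> 10 * N / (1 - 2 * rr n)" using E_upper[of n] by (simp add: E_def N_def)
    have r: "rr n \<le> eps / 4" "0 < rr n" "rr n \<le> 1/4096" using elim(4) rr_pos rr_le by auto
    define k0 where "k0 = 10 * NN n + q n"
    have qle: "real (q n) \<le> eps * N / 10"
    proof -
      have "q n * M \<le> NN n" unfolding q_def by (rule div_times_less_eq_dividend)
      hence "real (q n) * real M \<le> N" unfolding N_def by (metis of_nat_le_iff of_nat_mult)
      hence "real (q n) \<le> N / real M" using M by (simp add: divide_simps)
      also have "\<dots> \<le> N / (10 / eps)" using M N eps by (intro divide_left_mono) auto
      finally show ?thesis by (simp add: field_simps)
    qed
    have qN: "q n \<le> NN n" using M by (simp add: q_def)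
    have t1: "u1 * real k0 \<le> (1 + eps) * E"
    proof -
      have "real k0 \<le> 10 * N * (1 + eps / 100)" using qle by (simp add: k0_def N_def algebra_simps)
      hence "u1 * real k0 \<le> u1 * (10 * N * (1 + eps / 100))" using u1 by (intro mult_left_mono) auto
      also have "\<dots> = (1 + eps) * (10 * N)" using eps by (simp add: u1_def field_simps)
      also have "\<dots> \<le> (1 + eps) * E" using EL eps by (intro mult_left_mono) auto
      finally show ?thesis .
    qed
    have c0: "rho n ^ k0 * 2 ^ (10 * NN n) \<le> 3 * (1/2) ^ q n"
    proof -
      have "rho n ^ k0 * 2 ^ (10 * NN n) \<le> exp (4 * rr n * real k0) * (1/2) ^ (k0 - 10 * NN n)"
        by (rule rho_pow) (simp add: k0_def)
      also have "exp (4 * rr n * real k0) \<le> 3"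
      proof (rule exp_le3)
        have "real k0 \<le> 11 * N" using qN by (simp add: k0_def N_def)
        hence "4 * rr n * real k0 \<le> 4 * rr n * (11 * N)" using r by (intro mult_left_mono) auto
        also have "\<dots> = 44 * (N * rr n)" by simp
        also have "\<dots> \<le> 1" using rN[of n] by (simp add: N_def)
        finally show "4 * rr n * real k0 \<le> 1" .
      qed
      finally show ?thesis by (simp add: k0_def mult_right_mono)
    qed
    have up: "hit_gt (PP n) (SS n) {0} (xst n) ((1 + eps) * E) \<le> 3 * (1/2) ^ q n + b1 ^ (10 * NN n)"
    proof -
      have t0: "0 \<le> (1 + eps) * E" using EL eps N by simp
      have "(\<Sum>k. pois ((1 + eps) * E) k * avoid (PP n) (SS n) {0} k (xst n)) \<le> rho n ^ k0 * 2 ^ (10 * NN n) + b1 ^ k0"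
        unfolding b1_def
      proof (rule pois_upper[OF t1 less_imp_le[OF u1]])
        show "\<And>k. 0 \<le> avoid (PP n) (SS n) {0} k (xst n)" "\<And>k. avoid (PP n) (SS n) {0} k (xst n) \<le> 1"
          using avoid_bounds[OF stoch xst_props(1)] by auto
        show "0 \<le> rho n ^ k0 * 2 ^ (10 * NN n)" using rho_bounds[of n] by simp
        fix k assume k: "k0 \<le> k"
        have "avoid (PP n) (SS n) {0} k (xst n) \<le> rho n ^ k * 2 ^ (10 * NN n)"
          using avoid_geo[OF xst_props(1)[of n], where k = k] xst_props(4)[of n] by simp
        also have "\<dots> \<le> rho n ^ k0 * 2 ^ (10 * NN n)" using rho_bounds[of n] k
          by (intro mult_right_mono power_decreasing) auto
        finally show "avoid (PP n) (SS n) {0} k (xst n) \<le> rho n ^ k0 * 2 ^ (10 * NN n)" .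
      qed
      moreover have "b1 ^ k0 \<le> b1 ^ (10 * NN n)" using b1 by (intro power_decreasing) (auto simp: k0_def)
      ultimately show ?thesis using hit_gt_eq[OF t0] c0 by simp
    qed
    have lo: "hit_lt (PP n) (SS n) {0} (xst n) ((1 - eps) * E) \<le> (if eps < 1 then b2 ^ (10 * NN n) else 0)"
    proof (cases "(1 - eps) * E \<le> 0")
      case True
      have "0 \<le> (if eps < 1 then b2 ^ (10 * NN n) else 0)" using b2 by auto
      thus ?thesis using True by (simp add: hit_lt_def)
    next
      case False
      hence el: "eps < 1" using EL N by (smt (verit) mult_nonneg_nonneg mult_nonpos_nonneg)
      have s0: "0 \<le> (1 - eps) * E" using False by simp
      have su: "(1 - eps) * E \<le> u2 * real (10 * NN n)"
      proof -
        have d: "0 < 1 - 2 * rr n" using r by simp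
        have "(1 - eps) * E \<le> (1 - eps) * (10 * N / (1 - 2 * rr n))" using EU el by (intro mult_left_mono) auto
        also have "\<dots> \<le> u2 * (10 * N)"
        proof -
          have "1 - eps \<le> u2 * (1 - 2 * rr n)"
          proof -
            have "u2 * (1 - 2 * rr n) = 1 - eps / 2 - 2 * rr n + eps * rr n" by (simp add: u2_def algebra_simps)
            moreover have "0 \<le> eps * rr n" using eps r by simp
            ultimately show ?thesis using r by linarith
          qed
          hence "(1 - eps) * (10 * N) \<le> u2 * (1 - 2 * rr n) * (10 * N)" using N by (intro mult_right_mono) auto
          hence "(1 - eps) * (10 * N) / (1 - 2 * rr n) \<le> u2 * (10 * N)"
            using d by (simp add: divide_simps mult_ac)
          thus ?thesis by simp
        qed
        finally show ?thesis by (simp add: N_def)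
      qed
      have "1 - b2 ^ (10 * NN n) \<le> hit_gt (PP n) (SS n) {0} (xst n) ((1 - eps) * E)"
        unfolding b2_def by (rule hit_gt_xst_lower[OF s0 su]) (use el eps in \<open>auto simp: u2_def\<close>)
      thus ?thesis using False el by (simp add: hit_lt_def)
    qed
    have nn1: "0 \<le> hit_gt (PP n) (SS n) {0} (xst n) ((1 + eps) * E)" by (rule hit_gt_01[OF xst_props(1)])
    have nn2: "0 \<le> hit_lt (PP n) (SS n) {0} (xst n) ((1 - eps) * E)"
      using hit_gt_01[OF xst_props(1)] by (simp add: hit_lt_def)
    have bnd2: "(if eps < 1 then b2 ^ (10 * NN n) else 0) \<le> e / 4" using elim(3) e by auto
    have "hit_dev_prob (PP n) (SS n) {0} (xst n) eps \<le> 3 * (1/2) ^ q n + b1 ^ (10 * NN n) + e / 4"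
      using up lo bnd2 unfolding hit_dev_prob_def E_def by linarith
    also have "\<dots> < e" using elim(1) elim(2) e by linarith
    finally show ?case using nn1 nn2 unfolding hit_dev_prob_def E_def by simp
  qed
qed



theorem proposition1p4:
  shows "\<exists>(S :: nat \<Rightarrow> nat set) (P :: nat \<Rightarrow> nat \<Rightarrow> nat \<Rightarrow> real) (mu :: nat \<Rightarrow> nat \<Rightarrow> real)
            (A :: nat \<Rightarrow> nat set) (x :: nat \<Rightarrow> nat).
     (\<forall>n. fin_irr_rev_chain (S n) (P n) (mu n))
   \<and> (\<lambda>n. trel (S n) (P n)) \<in> o(\<lambda>n. tmix (S n) (P n) (mu n) (1/4))
   \<and> (\<forall>n. A n \<subseteq> S n \<and> x n \<in> S n)
   \<and> (\<forall>n. (\<Sum>y\<in>A n. mu n y) \<ge> 1/2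
          \<and> hit_exp (P n) (S n) (A n) (x n) = tH (S n) (P n) (mu n) (1/2))
   \<and> (\<forall>eps>0. (\<lambda>n. hit_dev_prob (P n) (S n) (A n) (x n) eps) \<longlonglongrightarrow> 0)
   \<and> \<not> has_cutoff S P mu"
proof -
  have c1: "\<forall>n. fin_irr_rev_chain (SS n) (PP n) (MU n)" using chain_ok by blast
  have c2: "(\<lambda>n. trel (SS n) (PP n)) \<in> o(\<lambda>n. tmix (SS n) (PP n) (MU n) (1/4))"
  proof (rule landau_o.smallI)
    fix c :: real assume c: "0 < c"
    show "eventually (\<lambda>n. norm (trel (SS n) (PP n)) \<le> c * norm (tmix (SS n) (PP n) (MU n) (1/4))) at_top"
      using evT ev_N[of "1 / (2 * c)"]
    proof eventually_elim
      case (elim n)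
      have t: "0 < trel (SS n) (PP n)" "trel (SS n) (PP n) \<le> 4" using trel_bound by auto
      have "4 \<le> c * (8 * real (NN n))" using elim(2) c by (simp add: divide_simps mult_ac)
      also have "\<dots> \<le> c * tmix (SS n) (PP n) (MU n) (1/4)" using elim(1) c by (intro mult_left_mono) auto
      also have "\<dots> \<le> c * norm (tmix (SS n) (PP n) (MU n) (1/4))" using c by (intro mult_left_mono) auto
      finally show ?case using t by simp
    qed
  qed
  have c3: "\<forall>n. {0} \<subseteq> SS n \<and> xst n \<in> SS n" using zero_SS xst_props by blast
  have c4: "\<forall>n. (\<Sum>y\<in>{0}. MU n y) \<ge> 1/2 \<and> hit_exp (PP n) (SS n) {0} (xst n) = tH (SS n) (PP n) (MU n) (1/2)"
    using MU0_half tH_eq by simp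
  have c5: "\<forall>eps>0. (\<lambda>n. hit_dev_prob (PP n) (SS n) {0} (xst n) eps) \<longlonglongrightarrow> 0" using conc by blast
  have c6: "\<not> has_cutoff SS PP MU"
  proof
    assume "has_cutoff SS PP MU"
    hence "\<forall>eps. 0 < eps \<and> eps < 1 \<longrightarrow> (\<lambda>n. tm n eps / tm n (1 - eps)) \<longlonglongrightarrow> 1"
      unfolding has_cutoff_def by blast
    hence lim: "(\<lambda>n. tm n (1/40) / tm n (1 - 1/40)) \<longlonglongrightarrow> 1"
      by (rule allE[where x = "1/40"]) simp
    have "eventually (\<lambda>n. tm n (1/40) / tm n (1 - 1/40) < 7/6) sequentially"
      using lim by (rule order_tendstoD(2)) simp
    moreover have "eventually (\<lambda>n. 7/6 \<le> tm n (1/40) / tm n (1 - 1/40)) sequentially"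
      using evT
    proof eventually_elim
      case (elim n)
      define N where "N = real (NN n)"
      have N: "16 \<le> N" using NN_ge[of n] by (simp add: N_def)
      have b: "0 < tm n (39/40)" "tm n (39/40) \<le> 12 * N" using elim N by (auto simp: N_def)
      have "7/6 = (14 * N) / (12 * N)" using N by simp
      also have "\<dots> \<le> tm n (1/40) / (12 * N)" using elim N by (intro divide_right_mono) (auto simp: N_def)
      also have "\<dots> \<le> tm n (1/40) / tm n (39/40)"
        using b elim N by (intro divide_left_mono) (auto simp: N_def)
      finally show ?case by simp
    qed
    ultimately have "eventually (\<lambda>n. False) sequentially" by eventually_elim simp
    thus False by simp
  qed
  show ?thesis
    by (rule exI[of _ SS], rule exI[of _ PP], rule exI[of _ MU], rule exI[of _ "\<lambda>n. {0}"], rule exI[of _ xst])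
       (use c1 c2 c3 c4 c5 c6 in simp)
qed


end
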